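(* Let $\Bbbk$ be a field, $S=\Bbbk[x_1,\ldots,x_n]$, $\prec$ a monomial order on $S$, $P=\{p_1,\ldots,p_m\}\subset\Bbbk^n$ distinct points, and $B$ the set of monomials outside $\mathrm{in}_\prec(I(P))$. Let $E=\{x_{i_1},\ldots,x_{i_{\bar n}}\}$ be a set of variables with $\mathrm{supp}(B)\subseteq E$, $|E|\le\min(m-1,n)$ and $E(P)$ of rank $|E|$, and suppose that for every variable $x_k\notin E$ there are constants $c_{k0},c_{kj}\in\Bbbk$ with $x_k-c_{k0}-\sum_j c_{kj}x_{i_j}\in I(P)$ and $x_k\succ x_{i_j}$ whenever $c_{kj}\ne0$. Let $\pi$, $T$, $\pi^*$, $\prec'$ be as in the context, and let $G'$ be the reduced Gröbner basis of $I(\pi(P))\subseteq T$ with respect to $\prec'$. Then $$G=\pi^*(G')\sqcup\Big\{x_k-c_{k0}-\sum_j c_{kj}\,\pi^*\big(\mathrm{nf}((\pi^* )^{-1}(x_{i_j}),G')\big)\ :\ x_k\notin E\Big\}$$ is a reduced Gröbner basis of $I(P)$ with respect to $\prec$.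
   Context: $I(Q)$ is the vanishing ideal of a finite point set $Q$; $\mathrm{in}_\prec$ denotes the initial ideal. The support of a set of monomials is the set of variables occurring in them. $E(P)$ is the matrix of evaluation vectors of the variables in $E$ at the points. $\pi:\Bbbk^n\to\Bbbk^{\bar n}$, $\pi(a_1,\ldots,a_n)=(a_{i_1},\ldots,a_{i_{\bar n}})$; $T=\Bbbk[y_{i_1},\ldots,y_{i_{\bar n}}]$; $\pi^*:T\to S$ the monomorphism $y_{i_j}\mapsto x_{i_j}$; $\prec'$ the order on $T$ with $y^\alpha\prec' y^\beta$ iff $\pi^*(y^\alpha)\prec\pi^*(y^\beta)$. For $f\in T$, $\mathrm{nf}(f,G')$ is the normal form of $f$ modulo $I(\pi(P))$ with respect to $G'$, i.e. the unique linear combination of monomials outside $\mathrm{in}_{\prec'}(I(\pi(P)))$ congruent to $f$ modulo $I(\pi(P))$. *)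

theory Defs
  imports "HOL-Library.Poly_Mapping" "Jordan_Normal_Form.DL_Rank"
begin

type_synonym monom = "nat \<Rightarrow>\<^sub>0 nat"
type_synonym 'a mpoly = "monom \<Rightarrow>\<^sub>0 'a"

definition Var :: "nat \<Rightarrow> 'a::comm_ring_1 mpoly" where
  "Var i = Poly_Mapping.single (Poly_Mapping.single i 1) 1"

definition Const :: "'a::comm_ring_1 \<Rightarrow> 'a mpoly" where
  "Const c = Poly_Mapping.single 0 c"

definition monom_poly :: "monom \<Rightarrow> 'a::comm_ring_1 mpoly" where
  "monom_poly m = Poly_Mapping.single m 1"

definition poly_vars :: "'a::zero mpoly \<Rightarrow> nat set" where
  "poly_vars f = \<Union> (Poly_Mapping.keys ` Poly_Mapping.keys f)"

definition supp :: "monom set \<Rightarrow> nat set" where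
  "supp B = \<Union> (Poly_Mapping.keys ` B)"

definition polys :: "nat set \<Rightarrow> 'a::zero mpoly set" where
  "polys V = {f. poly_vars f \<subseteq> V}"

definition monoms :: "nat set \<Rightarrow> monom set" where
  "monoms V = {m. Poly_Mapping.keys m \<subseteq> V}"

definition eval :: "'a::comm_ring_1 mpoly \<Rightarrow> (nat \<Rightarrow> 'a) \<Rightarrow> 'a" where
  "eval f a = (\<Sum>m\<in>Poly_Mapping.keys f. Poly_Mapping.lookup f m * (\<Prod>i\<in>Poly_Mapping.keys m. a i ^ Poly_Mapping.lookup m i))"

definition vanishing_ideal :: "nat set \<Rightarrow> (nat \<Rightarrow> 'a::comm_ring_1) set \<Rightarrow> 'a mpoly set" where
  "vanishing_ideal V Q = {f \<in> polys V. \<forall>a\<in>Q. eval f a = 0}"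

definition ideal_gen :: "nat set \<Rightarrow> 'a::comm_ring_1 mpoly set \<Rightarrow> 'a mpoly set" where
  "ideal_gen V A = {\<Sum>g\<in>G. q g * g | G q. finite G \<and> G \<subseteq> A \<and> (\<forall>g\<in>G. q g \<in> polys V)}"

definition monomial_order :: "nat set \<Rightarrow> (monom \<Rightarrow> monom \<Rightarrow> bool) \<Rightarrow> bool" where
  "monomial_order V ord \<longleftrightarrow>
     (\<forall>a\<in>monoms V. \<not> ord a a) \<and>
     (\<forall>a\<in>monoms V. \<forall>b\<in>monoms V. \<forall>c\<in>monoms V. ord a b \<longrightarrow> ord b c \<longrightarrow> ord a c) \<and>
     (\<forall>a\<in>monoms V. \<forall>b\<in>monoms V. a = b \<or> ord a b \<or> ord b a) \<and>
     (\<forall>a\<in>monoms V. \<forall>b\<in>monoms V. \<forall>c\<in>monoms V. ord a b \<longrightarrow> ord (a + c) (b + c)) \<and>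
     (\<forall>a\<in>monoms V. a \<noteq> 0 \<longrightarrow> ord 0 a)"

text \<open>restriction of an order to monomials in the variables E
  (the order on T pulled back along the inclusion pi*)\<close>
definition restrict_order :: "nat set \<Rightarrow> (monom \<Rightarrow> monom \<Rightarrow> bool) \<Rightarrow> monom \<Rightarrow> monom \<Rightarrow> bool" where
  "restrict_order E ord a b \<longleftrightarrow> a \<in> monoms E \<and> b \<in> monoms E \<and> ord a b"

definition lm :: "(monom \<Rightarrow> monom \<Rightarrow> bool) \<Rightarrow> 'a::zero mpoly \<Rightarrow> monom" where
  "lm ord f = (THE m. m \<in> Poly_Mapping.keys f \<and> (\<forall>m'\<in>Poly_Mapping.keys f. m' \<noteq> m \<longrightarrow> ord m' m))"

definition lc :: "(monom \<Rightarrow> monom \<Rightarrow> bool) \<Rightarrow> 'a::zero mpoly \<Rightarrow> 'a" where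
  "lc ord f = Poly_Mapping.lookup f (lm ord f)"

definition initial_ideal :: "nat set \<Rightarrow> (monom \<Rightarrow> monom \<Rightarrow> bool) \<Rightarrow> 'a::comm_ring_1 mpoly set \<Rightarrow> 'a mpoly set" where
  "initial_ideal V ord I = ideal_gen V {monom_poly (lm ord f) | f. f \<in> I \<and> f \<noteq> 0}"

definition std_monoms :: "nat set \<Rightarrow> (monom \<Rightarrow> monom \<Rightarrow> bool) \<Rightarrow> 'a::comm_ring_1 mpoly set \<Rightarrow> monom set" where
  "std_monoms V ord I = {m \<in> monoms V. (monom_poly m :: 'a mpoly) \<notin> initial_ideal V ord I}"

definition is_groebner_basis :: "nat set \<Rightarrow> (monom \<Rightarrow> monom \<Rightarrow> bool) \<Rightarrow> 'a::comm_ring_1 mpoly set \<Rightarrow> 'a mpoly set \<Rightarrow> bool" where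
  "is_groebner_basis V ord I G \<longleftrightarrow> finite G \<and> G \<subseteq> I \<and> 0 \<notin> G \<and>
     ideal_gen V {monom_poly (lm ord g) | g. g \<in> G} = initial_ideal V ord I"

definition is_reduced_groebner_basis :: "nat set \<Rightarrow> (monom \<Rightarrow> monom \<Rightarrow> bool) \<Rightarrow> 'a::comm_ring_1 mpoly set \<Rightarrow> 'a mpoly set \<Rightarrow> bool" where
  "is_reduced_groebner_basis V ord I G \<longleftrightarrow> is_groebner_basis V ord I G \<and>
     (\<forall>g\<in>G. lc ord g = 1) \<and>
     (\<forall>g\<in>G. \<forall>m\<in>Poly_Mapping.keys g. monom_poly m \<notin> ideal_gen V {(monom_poly (lm ord h) :: 'a mpoly) | h. h \<in> G - {g}})"

definition nf :: "nat set \<Rightarrow> (monom \<Rightarrow> monom \<Rightarrow> bool) \<Rightarrow> 'a::comm_ring_1 mpoly set \<Rightarrow> 'a mpoly \<Rightarrow> 'a mpoly" where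
  "nf V ord I f = (THE h. Poly_Mapping.keys h \<subseteq> std_monoms V ord I \<and> f - h \<in> I)"

text \<open>the projection pi onto the coordinates in E (coordinates outside E set to 0,
  which are irrelevant for polynomials in the variables E)\<close>
definition proj :: "nat set \<Rightarrow> (nat \<Rightarrow> 'a::zero) \<Rightarrow> (nat \<Rightarrow> 'a)" where
  "proj E p = (\<lambda>i. if i \<in> E then p i else 0)"

text \<open>E(P): the |E| x m matrix whose rows are the evaluation vectors of the variables
  x_i, i in E (in increasing order of i), at the points p_1,...,p_m\<close>
definition eval_matrix :: "nat set \<Rightarrow> nat \<Rightarrow> (nat \<Rightarrow> nat \<Rightarrow> 'a) \<Rightarrow> 'a mat" where
  "eval_matrix E m ps = mat (card E) m (\<lambda>(r, l). ps l (sorted_list_of_set E ! r))"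

end

theory Submission
  imports Defs "HOL-Computational_Algebra.Polynomial" "HOL-Library.FuncSet"
begin



lemma keys_add_nat: "Poly_Mapping.keys (a + b :: monom) = Poly_Mapping.keys a \<union> Poly_Mapping.keys b"
  by (auto simp: in_keys_iff lookup_add)

lemma monoms_add: "a \<in> monoms V \<Longrightarrow> b \<in> monoms V \<Longrightarrow> a + b \<in> monoms V"
  by (auto simp: monoms_def keys_add_nat)

lemma monoms_addD: "a + b \<in> monoms V \<Longrightarrow> a \<in> monoms V \<and> b \<in> monoms V"
  by (auto simp: monoms_def keys_add_nat)

lemma monoms_zero[simp]: "0 \<in> monoms V" by (simp add: monoms_def)

lemma single_monoms: "i \<in> V \<Longrightarrow> Poly_Mapping.single i j \<in> monoms V"
  by (simp add: monoms_def)

lemma polys_iff: "f \<in> polys V \<longleftrightarrow> Poly_Mapping.keys f \<subseteq> monoms V"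
  by (auto simp: polys_def poly_vars_def monoms_def)

lemma lookup_map': "Poly_Mapping.lookup (Poly_Mapping.map g p) k = (if Poly_Mapping.lookup p k = 0 then 0 else g (Poly_Mapping.lookup p k))"
  by transfer (simp add: when_def)

lemma Const_mult_lookup: "Poly_Mapping.lookup (Const c * f) m = (c::'a::comm_ring_1) * Poly_Mapping.lookup f m"
  unfolding Const_def by (simp flip: mult_map_scale_conv_mult add: lookup_map')

lemma Const_mult_keys: "Poly_Mapping.keys (Const c * f) \<subseteq> Poly_Mapping.keys (f :: 'a::comm_ring_1 mpoly)"
  by (auto simp: in_keys_iff Const_mult_lookup)

lemma Const_mult_single: "Const c * Poly_Mapping.single m (a::'a::comm_ring_1) = Poly_Mapping.single m (c * a)"
  unfolding Const_def by (simp add: mult_single)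

lemma monom_mult_single: "monom_poly w * Poly_Mapping.single m (a::'a::comm_ring_1) = Poly_Mapping.single (w + m) a"
  unfolding monom_poly_def by (simp add: mult_single)

lemma Const_0[simp]: "Const 0 = 0" by (simp add: Const_def)
lemma Const_1[simp]: "Const 1 = 1" by (simp add: Const_def)
lemma Const_mult_Const: "Const a * Const b = Const (a * b)" by (simp add: Const_def mult_single)
lemma Const_mult_assoc: "Const a * (Const b * f) = Const (a * b) * f"
  by (simp add: Const_mult_Const flip: mult.assoc)

lemma poly_repr: "f = (\<Sum>v\<in>Poly_Mapping.keys f. Poly_Mapping.single v (Poly_Mapping.lookup f v))"
  by (rule poly_mapping_eqI) (simp add: lookup_sum lookup_single when_def in_keys_iff)

lemma polys_add: "f \<in> polys V \<Longrightarrow> g \<in> polys V \<Longrightarrow> f + g \<in> polys V"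
  using keys_add[of f g] by (auto simp: polys_iff)
lemma keys_diff_sub: "Poly_Mapping.keys (f - g) \<subseteq> Poly_Mapping.keys f \<union> Poly_Mapping.keys (g::'a::cancel_comm_monoid_add mpoly)"
  by (auto simp: in_keys_iff lookup_minus)
lemma polys_diff: "f \<in> polys V \<Longrightarrow> g \<in> polys V \<Longrightarrow> f - g \<in> polys V"
  using keys_diff_sub[of f g] by (auto simp: polys_iff)
lemma polys_zero[simp]: "0 \<in> polys V" by (simp add: polys_iff)
lemma polys_mult: "f \<in> polys V \<Longrightarrow> g \<in> polys V \<Longrightarrow> f * g \<in> polys V"
proof -
  assume "f \<in> polys V" "g \<in> polys V"
  then have "Poly_Mapping.keys f \<subseteq> monoms V" "Poly_Mapping.keys g \<subseteq> monoms V" by (auto simp: polys_iff)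
  then have "{a + b |a b. a \<in> Poly_Mapping.keys f \<and> b \<in> Poly_Mapping.keys g} \<subseteq> monoms V"
    by (auto intro: monoms_add)
  then show ?thesis using keys_mult[of f g] by (auto simp: polys_iff)
qed
lemma polys_sum: "(\<And>x. x \<in> A \<Longrightarrow> F x \<in> polys V) \<Longrightarrow> sum F A \<in> polys V"
  by (induction A rule: infinite_finite_induct) (auto intro: polys_add)
lemma polys_Const[simp]: "Const c \<in> polys V" by (simp add: polys_iff Const_def)
lemma polys_Const_mult: "f \<in> polys V \<Longrightarrow> Const c * f \<in> polys V"
  using Const_mult_keys[of c f] by (auto simp: polys_iff)
lemma polys_Var: "i \<in> V \<Longrightarrow> Var i \<in> polys V" by (simp add: polys_iff Var_def monoms_def)
lemma polys_monom: "w \<in> monoms V \<Longrightarrow> monom_poly w \<in> polys V" by (simp add: polys_iff monom_poly_def)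
lemma polys_single: "w \<in> monoms V \<Longrightarrow> Poly_Mapping.single w c \<in> polys V" by (simp add: polys_iff)
lemma polys_mono: "V \<subseteq> W \<Longrightarrow> f \<in> polys V \<Longrightarrow> f \<in> polys W"
  by (auto simp: polys_def)

section \<open>Evaluation\<close>

definition mon_eval :: "monom \<Rightarrow> (nat \<Rightarrow> 'a::comm_ring_1) \<Rightarrow> 'a" where
  "mon_eval m a = (\<Prod>i\<in>Poly_Mapping.keys m. a i ^ Poly_Mapping.lookup m i)"

lemma eval_mon: "eval f a = (\<Sum>m\<in>Poly_Mapping.keys f. Poly_Mapping.lookup f m * mon_eval m a)"
  by (simp add: eval_def mon_eval_def)

lemma mon_eval_superset: "finite S \<Longrightarrow> Poly_Mapping.keys m \<subseteq> S \<Longrightarrow> mon_eval m a = (\<Prod>i\<in>S. a i ^ Poly_Mapping.lookup m i)"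
  unfolding mon_eval_def by (rule prod.mono_neutral_left) (auto simp: in_keys_iff)

lemma mon_eval_add: "mon_eval (m1 + m2) a = mon_eval m1 a * mon_eval m2 a"
proof -
  let ?S = "Poly_Mapping.keys m1 \<union> Poly_Mapping.keys m2"
  have "mon_eval (m1 + m2) a = (\<Prod>i\<in>?S. a i ^ Poly_Mapping.lookup (m1+m2) i)"
    by (rule mon_eval_superset) (auto simp: keys_add_nat)
  also have "\<dots> = (\<Prod>i\<in>?S. a i ^ Poly_Mapping.lookup m1 i) * (\<Prod>i\<in>?S. a i ^ Poly_Mapping.lookup m2 i)"
    by (simp add: lookup_add power_add prod.distrib)
  also have "\<dots> = mon_eval m1 a * mon_eval m2 a"
    using mon_eval_superset[of ?S m1 a] mon_eval_superset[of ?S m2 a] by simp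
  finally show ?thesis .
qed

lemma mon_eval_zero[simp]: "mon_eval 0 a = 1" by (simp add: mon_eval_def)

lemma mon_eval_single: "mon_eval (Poly_Mapping.single i j) a = a i ^ j"
  by (simp add: mon_eval_def)

lemma eval_superset: "finite S \<Longrightarrow> Poly_Mapping.keys f \<subseteq> S \<Longrightarrow>
   eval f a = (\<Sum>m\<in>S. Poly_Mapping.lookup f m * mon_eval m a)"
  unfolding eval_mon by (rule sum.mono_neutral_left) (auto simp: in_keys_iff)

lemma eval_add: "eval (f + g) a = eval f a + eval g a"
  unfolding eval_mon by (rule setsum_keys_plus_distrib) (auto simp: algebra_simps)

lemma eval_zero[simp]: "eval 0 a = 0" by (simp add: eval_def)

lemma eval_uminus: "eval (- f) a = - eval f a"
  by (simp add: eval_mon sum_negf)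

lemma eval_diff: "eval (f - g) a = eval f a - eval g a"
  using eval_add[of f "-g" a] by (simp add: eval_uminus)

lemma eval_sum: "eval (sum F A) a = (\<Sum>x\<in>A. eval (F x) a)"
  by (induction A rule: infinite_finite_induct) (auto simp: eval_add)

lemma eval_single: "eval (Poly_Mapping.single m c) a = c * mon_eval m a"
  by (simp add: eval_mon)

lemma eval_mult: "eval (f * g) a = eval f a * eval g a"
proof -
  have "f * g = (\<Sum>u\<in>Poly_Mapping.keys f. \<Sum>v\<in>Poly_Mapping.keys g.
        Poly_Mapping.single u (Poly_Mapping.lookup f u) * Poly_Mapping.single v (Poly_Mapping.lookup g v))"
    by (subst poly_repr[of f], subst poly_repr[of g]) (simp add: sum_product)
  then have "eval (f * g) a = (\<Sum>u\<in>Poly_Mapping.keys f. \<Sum>v\<in>Poly_Mapping.keys g.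
      Poly_Mapping.lookup f u * mon_eval u a * (Poly_Mapping.lookup g v * mon_eval v a))"
    by (simp add: eval_sum mult_single eval_single mon_eval_add algebra_simps)
  also have "\<dots> = eval f a * eval g a"
    by (simp add: eval_mon sum_product)
  finally show ?thesis .
qed

lemma eval_Const[simp]: "eval (Const c) a = c" by (simp add: Const_def eval_single)
lemma eval_Var[simp]: "eval (Var i) a = a i" by (simp add: Var_def eval_single mon_eval_single)
lemma eval_one[simp]: "eval 1 a = 1" using eval_Const[of 1 a] by simp

lemma eval_proj: "f \<in> polys E \<Longrightarrow> eval f (proj E p) = eval f p"
  unfolding eval_mon mon_eval_def polys_iff monoms_def proj_def
  by (intro sum.cong refl arg_cong2[where f="(*)"] prod.cong) auto




locale monord = fixes V :: "nat set" and ord :: "monom \<Rightarrow> monom \<Rightarrow> bool"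
  assumes mo: "monomial_order V ord"
begin

lemma irrefl: "a \<in> monoms V \<Longrightarrow> \<not> ord a a"
  using mo unfolding monomial_order_def by blast
lemma trans: "a \<in> monoms V \<Longrightarrow> b \<in> monoms V \<Longrightarrow> c \<in> monoms V \<Longrightarrow> ord a b \<Longrightarrow> ord b c \<Longrightarrow> ord a c"
  using mo unfolding monomial_order_def by blast
lemma total: "a \<in> monoms V \<Longrightarrow> b \<in> monoms V \<Longrightarrow> a = b \<or> ord a b \<or> ord b a"
  using mo unfolding monomial_order_def by blast
lemma add_right: "a \<in> monoms V \<Longrightarrow> b \<in> monoms V \<Longrightarrow> c \<in> monoms V \<Longrightarrow> ord a b \<Longrightarrow> ord (a + c) (b + c)"
  using mo unfolding monomial_order_def by blast
lemma add_left: "a \<in> monoms V \<Longrightarrow> b \<in> monoms V \<Longrightarrow> c \<in> monoms V \<Longrightarrow> ord a b \<Longrightarrow> ord (c + a) (c + b)"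
  using add_right by (simp add: add.commute)
lemma zero_less: "a \<in> monoms V \<Longrightarrow> a \<noteq> 0 \<Longrightarrow> ord 0 a"
  using mo unfolding monomial_order_def by blast
lemma asym: "a \<in> monoms V \<Longrightarrow> b \<in> monoms V \<Longrightarrow> ord a b \<Longrightarrow> \<not> ord b a"
  using trans irrefl by blast
lemma le_add: "a \<in> monoms V \<Longrightarrow> w \<in> monoms V \<Longrightarrow> w \<noteq> 0 \<Longrightarrow> ord a (a + w)"
  using add_left[of 0 w a] zero_less[of w] by simp
lemma single_less: "i \<in> V \<Longrightarrow> j < d \<Longrightarrow> ord (Poly_Mapping.single i j) (Poly_Mapping.single i d)"
proof -
  assume i: "i \<in> V" and jd: "j < d"
  have "Poly_Mapping.single i d = Poly_Mapping.single i j + Poly_Mapping.single i (d - j)"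
    using jd by (simp flip: single_add)
  moreover have "Poly_Mapping.single i (d - j) \<noteq> (0::monom)"
  proof
    assume "Poly_Mapping.single i (d - j) = (0::monom)"
    then have "Poly_Mapping.lookup (Poly_Mapping.single i (d - j)) i = 0" by simp
    with jd show False by simp
  qed
  ultimately show ?thesis using le_add[of "Poly_Mapping.single i j" "Poly_Mapping.single i (d - j)"] i
    by (simp add: single_monoms)
qed

lemma max_exists: "finite S \<Longrightarrow> S \<noteq> {} \<Longrightarrow> S \<subseteq> monoms V \<Longrightarrow> \<exists>m\<in>S. \<forall>m'\<in>S. m' \<noteq> m \<longrightarrow> ord m' m"
proof (induction S rule: finite_ne_induct)
  case (singleton x) then show ?case by blast
next
  case (insert x F)
  have FV: "F \<subseteq> monoms V" and xV: "x \<in> monoms V" using insert.prems by auto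
  obtain m where m: "m \<in> F" "\<forall>m'\<in>F. m' \<noteq> m \<longrightarrow> ord m' m" using insert.IH[OF FV] by blast
  have mV: "m \<in> monoms V" using m FV by blast
  have xm: "x \<noteq> m" using m insert.hyps by blast
  show ?case
  proof (cases "ord x m")
    case True
    have "\<forall>m'\<in>insert x F. m' \<noteq> m \<longrightarrow> ord m' m" using True m by blast
    then show ?thesis using m by blast
  next
    case False
    then have omx: "ord m x" using total[OF xV mV] xm by blast
    have "\<forall>m'\<in>insert x F. m' \<noteq> x \<longrightarrow> ord m' x"
    proof (intro ballI impI)
      fix m' assume "m' \<in> insert x F" "m' \<noteq> x"
      then have m'F: "m' \<in> F" by blast
      then have m'V: "m' \<in> monoms V" using FV by blast
      show "ord m' x"
      proof (cases "m' = m")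
        case True thus ?thesis using omx by simp
      next
        case False
        with m m'F have "ord m' m" by blast
        then show ?thesis using trans[OF m'V mV xV] omx by blast
      qed
    qed
    then show ?thesis by blast
  qed
qed

lemma lm_eq: assumes "m \<in> Poly_Mapping.keys f" "Poly_Mapping.keys f \<subseteq> monoms V"
    "\<forall>m'\<in>Poly_Mapping.keys f. m' \<noteq> m \<longrightarrow> ord m' m" shows "lm ord f = m"
  unfolding lm_def
proof (rule the_equality)
  show "m \<in> Poly_Mapping.keys f \<and> (\<forall>m'\<in>Poly_Mapping.keys f. m' \<noteq> m \<longrightarrow> ord m' m)" using assms by blast
next
  fix m2 assume m2: "m2 \<in> Poly_Mapping.keys f \<and> (\<forall>m'\<in>Poly_Mapping.keys f. m' \<noteq> m2 \<longrightarrow> ord m' m2)"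
  show "m2 = m"
  proof (rule ccontr)
    assume ne: "m2 \<noteq> m"
    have "ord m2 m" using assms(3) m2 ne by blast
    moreover have "ord m m2"
    proof -
      have "\<forall>m'\<in>Poly_Mapping.keys f. m' \<noteq> m2 \<longrightarrow> ord m' m2" using m2 by (rule conjunct2)
      then have "m \<noteq> m2 \<longrightarrow> ord m m2" using assms(1) by (rule bspec)
      then show ?thesis using ne by simp
    qed
    ultimately show False using asym[of m2 m] assms(1,2) m2 by blast
  qed
qed

lemma lm_prop: assumes "f \<noteq> 0" "Poly_Mapping.keys f \<subseteq> monoms V"
  shows "lm ord f \<in> Poly_Mapping.keys f \<and> (\<forall>m'\<in>Poly_Mapping.keys f. m' \<noteq> lm ord f \<longrightarrow> ord m' (lm ord f))"
proof -
  have "Poly_Mapping.keys f \<noteq> {}" using assms(1) by simp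
  then obtain m where m: "m \<in> Poly_Mapping.keys f" "\<forall>m'\<in>Poly_Mapping.keys f. m' \<noteq> m \<longrightarrow> ord m' m"
    using max_exists[OF finite_keys \<open>Poly_Mapping.keys f \<noteq> {}\<close> assms(2)] by blast
  have "lm ord f = m" by (rule lm_eq[OF m(1) assms(2) m(2)])
  then show ?thesis using m by simp
qed

end

lemma ideal_gen_base: "x \<in> Y \<Longrightarrow> (x::'a::comm_ring_1 mpoly) \<in> ideal_gen V Y"
  unfolding ideal_gen_def
  by (rule CollectI, rule exI[where x="{x}"], rule exI[where x="\<lambda>_. 1"])
     (simp add: polys_iff)

lemma ideal_gen_zero: "(0::'a::comm_ring_1 mpoly) \<in> ideal_gen V Y"
  unfolding ideal_gen_def by (rule CollectI, rule exI[where x="{}"]) simp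

lemma ideal_gen_add: assumes "a \<in> ideal_gen V Y" "b \<in> ideal_gen V Y"
  shows "(a::'a::comm_ring_1 mpoly) + b \<in> ideal_gen V Y"
proof -
  obtain G1 :: "'a mpoly set" and q1 where 1: "a = (\<Sum>g\<in>G1. q1 g * g)" "finite G1" "G1 \<subseteq> Y" "\<forall>g\<in>G1. q1 g \<in> polys V"
    using assms(1) unfolding ideal_gen_def by blast
  obtain G2 :: "'a mpoly set" and q2 where 2: "b = (\<Sum>g\<in>G2. q2 g * g)" "finite G2" "G2 \<subseteq> Y" "\<forall>g\<in>G2. q2 g \<in> polys V"
    using assms(2) unfolding ideal_gen_def by blast
  define q where "q g = (if g \<in> G1 then q1 g else 0) + (if g \<in> G2 then q2 g else 0)" for g
  have "(\<Sum>g\<in>G1 \<union> G2. q g * g) = (\<Sum>g\<in>G1 \<union> G2. (if g \<in> G1 then q1 g * g else 0)) +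
      (\<Sum>g\<in>G1 \<union> G2. (if g \<in> G2 then q2 g * g else 0))"
    unfolding q_def sum.distrib[symmetric] by (rule sum.cong) (auto simp: distrib_right)
  also have "\<dots> = a + b"
    using 1 2 by (simp add: sum.If_cases Int_absorb1 Int_absorb2)
  finally have "a + b = (\<Sum>g\<in>G1 \<union> G2. q g * g)" by simp
  moreover have "\<forall>g\<in>G1 \<union> G2. q g \<in> polys V" using 1 2 by (auto simp: q_def intro!: polys_add)
  ultimately show ?thesis using 1 2 unfolding ideal_gen_def by blast
qed

lemma ideal_gen_mult: assumes "p \<in> polys V" "a \<in> ideal_gen V Y"
  shows "p * (a::'a::comm_ring_1 mpoly) \<in> ideal_gen V Y"
proof -
  obtain G :: "'a mpoly set" and q where 1: "a = (\<Sum>g\<in>G. q g * g)" "finite G" "G \<subseteq> Y" "\<forall>g\<in>G. q g \<in> polys V"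
    using assms(2) unfolding ideal_gen_def by blast
  have "p * a = (\<Sum>g\<in>G. (p * q g) * g)" using 1 by (simp add: sum_distrib_left mult.assoc)
  moreover have "\<forall>g\<in>G. p * q g \<in> polys V" using 1 assms by (auto intro: polys_mult)
  ultimately show ?thesis using 1 unfolding ideal_gen_def
    by (intro CollectI exI[where x=G] exI[where x="\<lambda>g. p * q g"]) auto
qed

lemma ideal_gen_sum: "(\<And>x. x \<in> A \<Longrightarrow> F x \<in> ideal_gen V Y) \<Longrightarrow> sum F A \<in> ideal_gen V (Y::'a::comm_ring_1 mpoly set)"
  by (induction A rule: infinite_finite_induct) (auto intro: ideal_gen_add ideal_gen_zero)

lemma ideal_gen_closure: assumes "X \<subseteq> ideal_gen V Y"
  shows "ideal_gen V X \<subseteq> ideal_gen V (Y::'a::comm_ring_1 mpoly set)"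
proof
  fix f assume "f \<in> ideal_gen V X"
  then obtain G :: "'a mpoly set" and q where 1: "f = (\<Sum>g\<in>G. q g * g)" "finite G" "G \<subseteq> X" "\<forall>g\<in>G. q g \<in> polys V"
    unfolding ideal_gen_def by blast
  show "f \<in> ideal_gen V Y" unfolding 1(1)
    by (rule ideal_gen_sum, rule ideal_gen_mult) (use 1 assms in auto)
qed

lemma monom_poly_keys[simp]: "Poly_Mapping.keys (monom_poly m :: 'a::field mpoly) = {m}"
  by (simp add: monom_poly_def)

lemma monom_ideal_mem: assumes "monom_poly m \<in> ideal_gen V (monom_poly ` A :: 'a::field mpoly set)"
  shows "\<exists>a\<in>A. \<exists>w. m = a + w"
proof -
  obtain G :: "'a mpoly set" and q where 1: "monom_poly m = (\<Sum>g\<in>G. q g * g)" "finite G" "G \<subseteq> monom_poly ` A"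
    using assms unfolding ideal_gen_def by blast
  have "Poly_Mapping.keys (monom_poly m :: 'a mpoly) \<subseteq> (\<Union>g\<in>G. Poly_Mapping.keys (q g * g))"
    using keys_sum[of "\<lambda>g. q g * g" G] unfolding 1(1)[symmetric] .
  then have "m \<in> (\<Union>g\<in>G. Poly_Mapping.keys (q g * g))" by simp
  then obtain g where g: "g \<in> G" "m \<in> Poly_Mapping.keys (q g * g)" by blast
  then obtain a where a: "a \<in> A" "g = monom_poly a" using 1(3) by blast
  have "m \<in> {x + y |x y. x \<in> Poly_Mapping.keys (q g) \<and> y \<in> Poly_Mapping.keys g}"
    using keys_mult[of "q g" g] g(2) by blast
  then obtain x where "m = x + a" using a(2) by auto
  then show ?thesis using a(1) by (metis add.commute)
qed

lemma monom_ideal_mem': assumes "a \<in> A" "w \<in> monoms V" "m = a + w"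
  shows "monom_poly m \<in> ideal_gen V (monom_poly ` A :: 'a::field mpoly set)"
proof -
  have eq: "monom_poly m = monom_poly w * (monom_poly a :: 'a mpoly)"
    using assms by (simp add: monom_poly_def mult_single add.commute)
  have "monom_poly a \<in> ideal_gen V (monom_poly ` A :: 'a::field mpoly set)"
    using assms by (intro ideal_gen_base) auto
  from ideal_gen_mult[OF polys_monom[OF assms(2)] this] show ?thesis unfolding eq .
qed




lemma J_sum: assumes "0 \<in> J" "\<And>a b. a \<in> J \<Longrightarrow> b \<in> J \<Longrightarrow> a + b \<in> J"
  shows "(\<And>x. x \<in> A \<Longrightarrow> F x \<in> J) \<Longrightarrow> sum F A \<in> J"
  by (induction A rule: infinite_finite_induct) (use assms in auto)

lemma poly_repr_Const: "(\<Sum>v\<in>Poly_Mapping.keys r. Const (Poly_Mapping.lookup r v) * monom_poly v) = (r :: 'a::field mpoly)"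
proof -
  have "(\<Sum>v\<in>Poly_Mapping.keys r. Const (Poly_Mapping.lookup r v) * monom_poly v) =
        (\<Sum>v\<in>Poly_Mapping.keys r. Poly_Mapping.single v (Poly_Mapping.lookup r v))"
    by (rule sum.cong) (simp_all add: monom_poly_def Const_mult_single)
  then show ?thesis using poly_repr[of r] by simp
qed

context monord begin

lemma reduce_monom:
  fixes J :: "'a::field mpoly set" and T :: "monom set" and R :: "(monom \<times> monom) set"
  assumes J0: "0 \<in> J" and Jadd: "\<And>a b. a \<in> J \<Longrightarrow> b \<in> J \<Longrightarrow> a + b \<in> J"
    and Jsm: "\<And>c a. a \<in> J \<Longrightarrow> Const c * a \<in> J"
    and wfR: "wf R"
    and TV: "T \<subseteq> monoms V"
    and step: "\<And>u. u \<in> monoms V \<Longrightarrow> u \<notin> T \<Longrightarrow> \<exists>r. Poly_Mapping.keys r \<subseteq> monoms V \<and> monom_poly u - r \<in> J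
                 \<and> (\<forall>v\<in>Poly_Mapping.keys r. ord v u \<and> (v, u) \<in> R)"
  shows "u \<in> monoms V \<Longrightarrow> \<exists>h. Poly_Mapping.keys h \<subseteq> T \<and> monom_poly u - h \<in> J \<and> (u \<in> T \<longrightarrow> h = monom_poly u)
            \<and> (u \<notin> T \<longrightarrow> (\<forall>v\<in>Poly_Mapping.keys h. ord v u))"
proof (induction u rule: wf_induct_rule[OF wfR])
  case (1 u)
  show ?case
  proof (cases "u \<in> T")
    case True
    then show ?thesis using J0 by (intro exI[where x="monom_poly u"]) simp
  next
    case False
    obtain r :: "'a mpoly" where r: "Poly_Mapping.keys r \<subseteq> monoms V" "monom_poly u - r \<in> J"
       "\<forall>v\<in>Poly_Mapping.keys r. ord v u \<and> (v, u) \<in> R"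
      using step[OF 1(2) False] by blast
    have "\<forall>v\<in>Poly_Mapping.keys r. \<exists>h. Poly_Mapping.keys h \<subseteq> T \<and> monom_poly v - h \<in> J \<and> (v \<in> T \<longrightarrow> h = monom_poly v)
            \<and> (v \<notin> T \<longrightarrow> (\<forall>w\<in>Poly_Mapping.keys h. ord w v))"
    proof
      fix v assume v: "v \<in> Poly_Mapping.keys r"
      show "\<exists>h. Poly_Mapping.keys h \<subseteq> T \<and> monom_poly v - h \<in> J \<and> (v \<in> T \<longrightarrow> h = monom_poly v)
            \<and> (v \<notin> T \<longrightarrow> (\<forall>w\<in>Poly_Mapping.keys h. ord w v))"
        using 1(1)[of v] r v by blast
    qed
    then obtain H where H: "\<forall>v\<in>Poly_Mapping.keys r. Poly_Mapping.keys (H v) \<subseteq> T \<and> monom_poly v - H v \<in> J \<and> (v \<in> T \<longrightarrow> H v = monom_poly v)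
            \<and> (v \<notin> T \<longrightarrow> (\<forall>w\<in>Poly_Mapping.keys (H v). ord w v))"
      by (rule bchoice[elim_format]) blast
    define h where "h = (\<Sum>v\<in>Poly_Mapping.keys r. Const (Poly_Mapping.lookup r v) * H v)"
    have kh: "Poly_Mapping.keys h \<subseteq> (\<Union>v\<in>Poly_Mapping.keys r. Poly_Mapping.keys (H v))"
      unfolding h_def using keys_sum Const_mult_keys by fastforce
    have Hle: "ord w u" if v: "v \<in> Poly_Mapping.keys r" and w: "w \<in> Poly_Mapping.keys (H v)" for v w
    proof (cases "v \<in> T")
      case True
      then have "w = v" using H v w by simp
      then show ?thesis using r v by blast
    next
      case False
      then have "ord w v" using H v w by blast
      moreover have "w \<in> monoms V" using H v w TV by blast
      moreover have "v \<in> monoms V" using r v by blast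
      ultimately show ?thesis using trans[of w v u] r v 1(2) by blast
    qed
    have "monom_poly u - h = (monom_poly u - r) +
        (\<Sum>v\<in>Poly_Mapping.keys r. Const (Poly_Mapping.lookup r v) * (monom_poly v - H v))"
      unfolding h_def by (simp add: right_diff_distrib sum_subtractf poly_repr_Const)
    also have "\<dots> \<in> J"
      using r H by (intro Jadd J_sum[OF J0 Jadd] Jsm) auto
    finally have "monom_poly u - h \<in> J" .
    moreover have "Poly_Mapping.keys h \<subseteq> T" using kh H by blast
    moreover have "\<forall>w\<in>Poly_Mapping.keys h. ord w u" using kh Hle by blast
    ultimately show ?thesis using False by blast
  qed
qed

lemma reduce_poly:
  fixes J :: "'a::field mpoly set" and T :: "monom set" and R :: "(monom \<times> monom) set"
  assumes J0: "0 \<in> J" and Jadd: "\<And>a b. a \<in> J \<Longrightarrow> b \<in> J \<Longrightarrow> a + b \<in> J"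
    and Jsm: "\<And>c a. a \<in> J \<Longrightarrow> Const c * a \<in> J"
    and wfR: "wf R"
    and TV: "T \<subseteq> monoms V"
    and step: "\<And>u. u \<in> monoms V \<Longrightarrow> u \<notin> T \<Longrightarrow> \<exists>r. Poly_Mapping.keys r \<subseteq> monoms V \<and> monom_poly u - r \<in> J
                 \<and> (\<forall>v\<in>Poly_Mapping.keys r. ord v u \<and> (v, u) \<in> R)"
    and fV: "Poly_Mapping.keys f \<subseteq> monoms V"
  shows "\<exists>h. Poly_Mapping.keys h \<subseteq> T \<and> f - h \<in> J
     \<and> (\<forall>v\<in>Poly_Mapping.keys h. \<exists>u\<in>Poly_Mapping.keys f. v = u \<or> ord v u)
     \<and> (\<forall>m. m \<in> T \<longrightarrow> m \<in> Poly_Mapping.keys f \<longrightarrow> (\<forall>u\<in>Poly_Mapping.keys f. u \<noteq> m \<longrightarrow> ord u m)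
           \<longrightarrow> Poly_Mapping.lookup h m = Poly_Mapping.lookup f m)"
proof -
  have "\<forall>u\<in>Poly_Mapping.keys f. \<exists>h. Poly_Mapping.keys h \<subseteq> T \<and> monom_poly u - h \<in> J \<and> (u \<in> T \<longrightarrow> h = monom_poly u)
            \<and> (u \<notin> T \<longrightarrow> (\<forall>v\<in>Poly_Mapping.keys h. ord v u))"
  proof
    fix u assume "u \<in> Poly_Mapping.keys f"
    then have "u \<in> monoms V" using fV by blast
    then show "\<exists>h. Poly_Mapping.keys h \<subseteq> T \<and> monom_poly u - h \<in> J \<and> (u \<in> T \<longrightarrow> h = monom_poly u)
            \<and> (u \<notin> T \<longrightarrow> (\<forall>v\<in>Poly_Mapping.keys h. ord v u))"
      using reduce_monom[OF J0 Jadd Jsm wfR TV step] by blast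
  qed
  then obtain H :: "monom \<Rightarrow> 'a mpoly" where H: "\<forall>u\<in>Poly_Mapping.keys f. Poly_Mapping.keys (H u) \<subseteq> T \<and> monom_poly u - H u \<in> J \<and> (u \<in> T \<longrightarrow> H u = monom_poly u)
            \<and> (u \<notin> T \<longrightarrow> (\<forall>v\<in>Poly_Mapping.keys (H u). ord v u))"
    by (rule bchoice[elim_format]) blast
  define h where "h = (\<Sum>u\<in>Poly_Mapping.keys f. Const (Poly_Mapping.lookup f u) * H u)"
  have kh: "Poly_Mapping.keys h \<subseteq> (\<Union>u\<in>Poly_Mapping.keys f. Poly_Mapping.keys (H u))"
    unfolding h_def using keys_sum Const_mult_keys by fastforce
  have "f - h = (\<Sum>u\<in>Poly_Mapping.keys f. Const (Poly_Mapping.lookup f u) * (monom_poly u - H u))"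
    unfolding h_def by (simp add: right_diff_distrib sum_subtractf poly_repr_Const)
  also have "\<dots> \<in> J"
    using H by (intro J_sum[OF J0 Jadd] Jsm) auto
  finally have 1: "f - h \<in> J" .
  have 2: "Poly_Mapping.keys h \<subseteq> T" using kh H by blast
  have 3: "\<forall>v\<in>Poly_Mapping.keys h. \<exists>u\<in>Poly_Mapping.keys f. v = u \<or> ord v u"
  proof
    fix v assume "v \<in> Poly_Mapping.keys h"
    then obtain u where u: "u \<in> Poly_Mapping.keys f" "v \<in> Poly_Mapping.keys (H u)" using kh by blast
    show "\<exists>u\<in>Poly_Mapping.keys f. v = u \<or> ord v u"
    proof (cases "u \<in> T")
      case True then show ?thesis using H u by auto
    next
      case False then show ?thesis using H u by blast
    qed
  qed
  have 4: "Poly_Mapping.lookup h m = Poly_Mapping.lookup f m"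
    if m: "m \<in> T" "m \<in> Poly_Mapping.keys f" "\<forall>u\<in>Poly_Mapping.keys f. u \<noteq> m \<longrightarrow> ord u m" for m
  proof -
    have "Poly_Mapping.lookup h m = (\<Sum>u\<in>Poly_Mapping.keys f. Poly_Mapping.lookup f u * Poly_Mapping.lookup (H u) m)"
      unfolding h_def by (simp add: lookup_sum Const_mult_lookup)
    also have "\<dots> = Poly_Mapping.lookup f m * Poly_Mapping.lookup (H m) m +
        (\<Sum>u\<in>Poly_Mapping.keys f - {m}. Poly_Mapping.lookup f u * Poly_Mapping.lookup (H u) m)"
      using m(2) by (simp add: sum.remove)
    also have "(\<Sum>u\<in>Poly_Mapping.keys f - {m}. Poly_Mapping.lookup f u * Poly_Mapping.lookup (H u) m) = 0"
    proof (rule sum.neutral, rule ballI)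
      fix u assume u: "u \<in> Poly_Mapping.keys f - {m}"
      have "Poly_Mapping.lookup (H u) m = 0"
      proof (cases "u \<in> T")
        case True
        then have "H u = monom_poly u" using H u by blast
        then show ?thesis using u by (simp add: monom_poly_def lookup_single)
      next
        case False
        have "m \<notin> Poly_Mapping.keys (H u)"
        proof
          assume "m \<in> Poly_Mapping.keys (H u)"
          then have "ord m u" using H u False by blast
          moreover have "ord u m" using m(3) u by blast
          moreover have "u \<in> monoms V" "m \<in> monoms V" using u m fV by blast+
          ultimately show False using asym by blast
        qed
        then show ?thesis by (simp add: in_keys_iff)
      qed
      then show "Poly_Mapping.lookup f u * Poly_Mapping.lookup (H u) m = 0" by simp
    qed
    also have "H m = monom_poly m" using H m by blast
    finally show ?thesis by (simp add: monom_poly_def)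
  qed
  show ?thesis using 1 2 3 4 by blast
qed

end




lemma keys_uminus': "Poly_Mapping.keys (- (a::'a::ab_group_add mpoly)) = Poly_Mapping.keys a"
  by (auto simp: in_keys_iff)

lemma split_single: "d \<le> Poly_Mapping.lookup u i \<Longrightarrow> (u::monom) = (u - Poly_Mapping.single i d) + Poly_Mapping.single i d"
  by (rule poly_mapping_eqI) (auto simp: lookup_add lookup_minus lookup_single when_def)

lemma van_polys: "f \<in> vanishing_ideal V Q \<Longrightarrow> f \<in> polys V"
  by (simp add: vanishing_ideal_def)

lemma van_zero: "0 \<in> vanishing_ideal V Q" by (simp add: vanishing_ideal_def)
lemma van_add: "a \<in> vanishing_ideal V Q \<Longrightarrow> b \<in> vanishing_ideal V Q \<Longrightarrow> a + b \<in> vanishing_ideal V Q"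
  by (simp add: vanishing_ideal_def polys_add eval_add)
lemma van_diff: "a \<in> vanishing_ideal V Q \<Longrightarrow> b \<in> vanishing_ideal V Q \<Longrightarrow> a - b \<in> vanishing_ideal V Q"
  by (simp add: vanishing_ideal_def polys_diff eval_diff)
lemma van_mult: "p \<in> polys V \<Longrightarrow> a \<in> vanishing_ideal V Q \<Longrightarrow> p * a \<in> vanishing_ideal V Q"
  by (simp add: vanishing_ideal_def polys_mult eval_mult)
lemma van_Const: "a \<in> vanishing_ideal V Q \<Longrightarrow> Const c * a \<in> vanishing_ideal V Q"
  by (simp add: van_mult)
lemma van_sum: "(\<And>x. x \<in> A \<Longrightarrow> F x \<in> vanishing_ideal V Q) \<Longrightarrow> sum F A \<in> vanishing_ideal V Q"
  by (rule J_sum[OF van_zero]) (auto intro: van_add)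

lemma init_gen_set: "{monom_poly (lm ord f) | f. f \<in> I \<and> f \<noteq> 0} = monom_poly ` {lm ord f | f. f \<in> I \<and> f \<noteq> 0}"
  by auto

context monord begin

lemma nf_unique:
  fixes Q :: "(nat \<Rightarrow> 'a::field) set"
  assumes "Poly_Mapping.keys h1 \<subseteq> std_monoms V ord (vanishing_ideal V Q)"
    "Poly_Mapping.keys h2 \<subseteq> std_monoms V ord (vanishing_ideal V Q)"
    "f - h1 \<in> vanishing_ideal V Q" "f - h2 \<in> vanishing_ideal V Q"
  shows "h1 = h2"
proof (rule ccontr)
  assume ne: "h1 \<noteq> h2"
  let ?I = "vanishing_ideal V Q"
  define d where "d = h1 - h2"
  have dI: "d \<in> ?I" unfolding d_def using van_diff[OF assms(4) assms(3)] by (simp add: algebra_simps)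
  have d0: "d \<noteq> 0" using ne by (simp add: d_def)
  have kd: "Poly_Mapping.keys d \<subseteq> std_monoms V ord ?I"
    using keys_diff_sub[of h1 h2] assms(1,2) unfolding d_def by blast
  then have kdV: "Poly_Mapping.keys d \<subseteq> monoms V" by (auto simp: std_monoms_def)
  have "lm ord d \<in> Poly_Mapping.keys d" using lm_prop[OF d0 kdV] by blast
  then have "lm ord d \<in> std_monoms V ord ?I" using kd by blast
  moreover have "monom_poly (lm ord d) \<in> initial_ideal V ord ?I"
    unfolding initial_ideal_def by (rule ideal_gen_base) (use dI d0 in blast)
  ultimately show False by (simp add: std_monoms_def)
qed

lemma nf_exists:
  fixes Q :: "(nat \<Rightarrow> 'a::field) set"
  assumes finV: "finite V" and finQ: "finite Q" and fV: "f \<in> polys V"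
  shows "\<exists>h. Poly_Mapping.keys h \<subseteq> std_monoms V ord (vanishing_ideal V Q) \<and> f - h \<in> vanishing_ideal V Q
     \<and> (\<forall>v\<in>Poly_Mapping.keys h. \<exists>u\<in>Poly_Mapping.keys f. v = u \<or> ord v u)"
proof -
  let ?I = "vanishing_ideal V Q"
  define p where "p i = (\<Prod>a\<in>(\<lambda>q. q i) ` Q. [:-a, 1:])" for i
  define d where "d i = degree (p i)" for i
  define F where "F i = (\<Sum>j\<le>d i. Poly_Mapping.single (Poly_Mapping.single i j) (coeff (p i) j))" for i
  have lc1: "coeff (p i) (d i) = 1" for i
    unfolding d_def p_def by (simp add: lead_coeff_prod)
  have FI: "F i \<in> ?I" if i: "i \<in> V" for i
  proof -
    have "F i \<in> polys V" unfolding F_def using i by (intro polys_sum polys_single single_monoms)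
    moreover have "eval (F i) q = 0" if q: "q \<in> Q" for q
    proof -
      have "eval (F i) q = (\<Sum>j\<le>d i. coeff (p i) j * q i ^ j)"
        unfolding F_def by (simp add: eval_sum eval_single mon_eval_single)
      also have "\<dots> = poly (p i) (q i)" by (simp add: poly_altdef d_def)
      also have "\<dots> = 0" unfolding p_def poly_prod using finQ q
        by (intro prod_zero) auto
      finally show ?thesis .
    qed
    ultimately show ?thesis by (simp add: vanishing_ideal_def)
  qed
  define Box where "Box = {u \<in> monoms V. \<forall>i\<in>V. Poly_Mapping.lookup u i < d i}"
  have finBox: "finite Box"
  proof -
    let ?emb = "\<lambda>g. Abs_poly_mapping (\<lambda>k. if k \<in> V then g k else 0) :: monom"
    have "Box \<subseteq> ?emb ` (\<Pi>\<^sub>E i\<in>V. {..<d i})"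
    proof
      fix u assume u: "u \<in> Box"
      have "u = ?emb (restrict (Poly_Mapping.lookup u) V)"
      proof (rule poly_mapping_eqI)
        fix k
        have fin: "finite {k. (if k \<in> V then restrict (Poly_Mapping.lookup u) V k else 0) \<noteq> 0}"
          using finV by (rule finite_subset[rotated]) auto
        have "Poly_Mapping.lookup u k = 0" if "k \<notin> V" using u that
          by (auto simp: Box_def monoms_def in_keys_iff)
        then show "Poly_Mapping.lookup u k = Poly_Mapping.lookup (?emb (restrict (Poly_Mapping.lookup u) V)) k"
          using fin by (auto simp: lookup_Abs_poly_mapping)
      qed
      moreover have "restrict (Poly_Mapping.lookup u) V \<in> (\<Pi>\<^sub>E i\<in>V. {..<d i})"
        using u by (auto simp: Box_def)
      ultimately show "u \<in> ?emb ` (\<Pi>\<^sub>E i\<in>V. {..<d i})" by blast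
    qed
    moreover have "finite (\<Pi>\<^sub>E i\<in>V. {..<d i})" using finV by (intro finite_PiE) auto
    ultimately show ?thesis by (meson finite_surj)
  qed
  define tdeg where "tdeg u = (\<Sum>i\<in>V. Poly_Mapping.lookup u i)" for u :: monom
  define below where "below u = {b \<in> Box. b = u \<or> ord b u}" for u
  define R where "R = inv_image (less_than <*lex*> less_than) (\<lambda>u. (card (below u), tdeg u))"
  have wfR: "wf R" unfolding R_def by auto
  have below_mono: "below v \<subseteq> below u" if "ord v u" "v \<in> monoms V" "u \<in> monoms V" for u v
    using that trans unfolding below_def Box_def by blast
  let ?T = "std_monoms V ord ?I"
  have TV: "?T \<subseteq> monoms V" by (auto simp: std_monoms_def)
  have step: "\<exists>r. Poly_Mapping.keys r \<subseteq> monoms V \<and> monom_poly u - r \<in> ?I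
                 \<and> (\<forall>v\<in>Poly_Mapping.keys r. ord v u \<and> (v, u) \<in> R)"
    if uV: "u \<in> monoms V" and uT: "u \<notin> ?T" for u
  proof (cases "u \<in> Box")
    case False
    then obtain i where i: "i \<in> V" "d i \<le> Poly_Mapping.lookup u i" using uV by (auto simp: Box_def not_less)
    define w where "w = u - Poly_Mapping.single i (d i)"
    have u_eq: "u = w + Poly_Mapping.single i (d i)" unfolding w_def by (rule split_single[OF i(2)])
    have wV: "w \<in> monoms V" using monoms_addD[of w "Poly_Mapping.single i (d i)" V] uV u_eq by simp
    define r where "r = - (\<Sum>j<d i. Poly_Mapping.single (w + Poly_Mapping.single i j) (coeff (p i) j))"
    have "monom_poly w * F i = (\<Sum>j\<le>d i. Poly_Mapping.single (w + Poly_Mapping.single i j) (coeff (p i) j))"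
      unfolding F_def by (simp add: sum_distrib_left monom_mult_single)
    also have "\<dots> = monom_poly u + (\<Sum>j<d i. Poly_Mapping.single (w + Poly_Mapping.single i j) (coeff (p i) j))"
      by (simp add: lessThan_Suc_atMost[symmetric] lc1 u_eq monom_poly_def add.commute)
    finally have eq: "monom_poly u - r = monom_poly w * F i" by (simp add: r_def)
    have kr: "Poly_Mapping.keys r \<subseteq> {w + Poly_Mapping.single i j | j. j < d i}"
      unfolding r_def keys_uminus' by (rule order_trans[OF keys_sum]) (auto split: if_splits)
    have "\<forall>v\<in>Poly_Mapping.keys r. v \<in> monoms V \<and> ord v u \<and> (v, u) \<in> R"
    proof
      fix v assume "v \<in> Poly_Mapping.keys r"
      then obtain j where j: "j < d i" "v = w + Poly_Mapping.single i j" using kr by blast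
      have vV: "v \<in> monoms V" using j wV i by (simp add: monoms_add single_monoms)
      have ovu: "ord v u" unfolding j(2) u_eq
        by (rule add_left[OF single_monoms[OF i(1)] single_monoms[OF i(1)] wV single_less[OF i(1) j(1)]])
      have "card (below v) \<le> card (below u)"
        using card_mono[OF _ below_mono[OF ovu vV uV]] finBox by (simp add: below_def)
      moreover have "tdeg v < tdeg u"
      proof -
        have "tdeg v = tdeg w + j" unfolding tdeg_def j(2) using i(1) finV
          by (simp add: lookup_add sum.distrib lookup_single when_def)
        moreover have "tdeg u = tdeg w + d i" unfolding tdeg_def u_eq using i(1) finV
          by (simp add: lookup_add sum.distrib lookup_single when_def)
        ultimately show ?thesis using j(1) by simp
      qed
      ultimately have "(v, u) \<in> R" unfolding R_def by auto
      then show "v \<in> monoms V \<and> ord v u \<and> (v, u) \<in> R" using vV ovu by blast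
    qed
    then show ?thesis using eq van_mult[OF polys_monom[OF wV] FI[OF i(1)]] by (intro exI[where x=r]) auto
  next
    case True
    have "monom_poly u \<in> initial_ideal V ord ?I" using uT uV by (simp add: std_monoms_def)
    then obtain a w where a: "a \<in> {lm ord f | f. f \<in> ?I \<and> f \<noteq> 0}" and uaw: "u = a + w"
      unfolding initial_ideal_def init_gen_set using monom_ideal_mem by blast
    then obtain f where f: "f \<in> ?I" "f \<noteq> 0" "a = lm ord f" by blast
    have fV: "Poly_Mapping.keys f \<subseteq> monoms V" using van_polys[OF f(1)] by (simp add: polys_iff)
    have lmf: "lm ord f \<in> Poly_Mapping.keys f" "\<forall>m'\<in>Poly_Mapping.keys f. m' \<noteq> lm ord f \<longrightarrow> ord m' (lm ord f)"
      using lm_prop[OF f(2) fV] by blast+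
    have wV: "w \<in> monoms V" using monoms_addD[of a w V] uV uaw by simp
    define lc where "lc = Poly_Mapping.lookup f a"
    have lc0: "lc \<noteq> 0" using lmf f(3) by (simp add: lc_def in_keys_iff)
    define r where "r = - (\<Sum>v\<in>Poly_Mapping.keys f - {a}. Poly_Mapping.single (w + v) (Poly_Mapping.lookup f v / lc))"
    have "Const (1 / lc) * (monom_poly w * f) = (\<Sum>v\<in>Poly_Mapping.keys f. Poly_Mapping.single (w + v) (Poly_Mapping.lookup f v / lc))"
      by (subst (1) poly_repr[of f]) (simp add: sum_distrib_left monom_mult_single Const_mult_single)
    also have "\<dots> = monom_poly u + (\<Sum>v\<in>Poly_Mapping.keys f - {a}. Poly_Mapping.single (w + v) (Poly_Mapping.lookup f v / lc))"
      using lmf(1) f(3) lc0 by (simp add: sum.remove uaw add.commute monom_poly_def lc_def)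
    finally have eq: "monom_poly u - r = Const (1 / lc) * (monom_poly w * f)" by (simp add: r_def)
    have kr: "Poly_Mapping.keys r \<subseteq> {w + v | v. v \<in> Poly_Mapping.keys f - {a}}"
      unfolding r_def keys_uminus' by (rule order_trans[OF keys_sum]) (auto split: if_splits)
    have "\<forall>v\<in>Poly_Mapping.keys r. v \<in> monoms V \<and> ord v u \<and> (v, u) \<in> R"
    proof
      fix v assume "v \<in> Poly_Mapping.keys r"
      then obtain v' where v': "v' \<in> Poly_Mapping.keys f" "v' \<noteq> a" "v = w + v'" using kr by blast
      have v'V: "v' \<in> monoms V" using v' fV by blast
      have aV: "a \<in> monoms V" using monoms_addD[of a w V] uV uaw by simp
      have vV: "v \<in> monoms V" using v' v'V wV by (simp add: monoms_add)
      have ovu: "ord v u" unfolding v'(3) uaw using add_left[OF v'V aV wV] lmf(2) v' f(3)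
        by (simp add: add.commute)
      have "below v \<subseteq> below u - {u}"
        using below_mono[OF ovu vV uV] ovu irrefl[OF uV] asym[OF vV uV ovu]
        unfolding below_def by blast
      moreover have "u \<in> below u" using True by (simp add: below_def)
      ultimately have "card (below v) < card (below u)"
        by (intro psubset_card_mono) (auto simp: below_def finBox)
      then have "(v, u) \<in> R" unfolding R_def by auto
      then show "v \<in> monoms V \<and> ord v u \<and> (v, u) \<in> R" using vV ovu by blast
    qed
    then show ?thesis using eq van_Const[OF van_mult[OF polys_monom[OF wV] f(1)]] by (intro exI[where x=r]) auto
  qed
  have fV': "Poly_Mapping.keys f \<subseteq> monoms V" using fV by (simp add: polys_iff)
  show ?thesis
    using reduce_poly[OF van_zero van_add van_Const wfR TV step fV'] by blast
qed

lemma nf_char: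
  fixes Q :: "(nat \<Rightarrow> 'a::field) set"
  assumes finV: "finite V" and finQ: "finite Q" and fV: "f \<in> polys V"
  shows "Poly_Mapping.keys (nf V ord (vanishing_ideal V Q) f) \<subseteq> std_monoms V ord (vanishing_ideal V Q)
     \<and> f - nf V ord (vanishing_ideal V Q) f \<in> vanishing_ideal V Q
     \<and> (\<forall>v\<in>Poly_Mapping.keys (nf V ord (vanishing_ideal V Q) f). \<exists>u\<in>Poly_Mapping.keys f. v = u \<or> ord v u)"
proof -
  obtain h where h: "Poly_Mapping.keys h \<subseteq> std_monoms V ord (vanishing_ideal V Q)" "f - h \<in> vanishing_ideal V Q"
     "\<forall>v\<in>Poly_Mapping.keys h. \<exists>u\<in>Poly_Mapping.keys f. v = u \<or> ord v u"
    using nf_exists[OF finV finQ fV] by blast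
  have "nf V ord (vanishing_ideal V Q) f = h"
    unfolding nf_def
  proof (rule the_equality)
    show "Poly_Mapping.keys h \<subseteq> std_monoms V ord (vanishing_ideal V Q) \<and> f - h \<in> vanishing_ideal V Q"
      using h by blast
  next
    fix h2 assume "Poly_Mapping.keys h2 \<subseteq> std_monoms V ord (vanishing_ideal V Q) \<and> f - h2 \<in> vanishing_ideal V Q"
    then show "h2 = h" using nf_unique[of h2 Q h f] h by blast
  qed
  then show ?thesis using h by simp
qed

end




lemma single_nz: "Poly_Mapping.single k (1::nat) \<noteq> 0"
proof
  assume "Poly_Mapping.single k (1::nat) = 0"
  then have "Poly_Mapping.lookup (Poly_Mapping.single k (1::nat)) k = Poly_Mapping.lookup 0 k" by simp
  then show False by simp
qed

lemma lm_image_set: "{monom_poly (lm ord g) | g. g \<in> G} = monom_poly ` (lm ord ` G)" by auto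

locale main_setting =
  fixes n m :: nat and ps :: "nat \<Rightarrow> nat \<Rightarrow> 'a::field" and ord :: "monom \<Rightarrow> monom \<Rightarrow> bool"
    and E :: "nat set" and c0 :: "nat \<Rightarrow> 'a" and c :: "nat \<Rightarrow> nat \<Rightarrow> 'a" and G' :: "'a mpoly set"
    and P :: "(nat \<Rightarrow> 'a) set"
  assumes P_def: "P = ps ` {..<m}"
    and ord: "monomial_order {..<n} ord"
    and E_sub: "E \<subseteq> {..<n}"
    and m_pos: "0 < m"
    and lin: "\<forall>k\<in>{..<n} - E.
          Var k - Const (c0 k) - (\<Sum>i\<in>E. Const (c k i) * Var i) \<in> vanishing_ideal {..<n} P
        \<and> (\<forall>i\<in>E. c k i \<noteq> 0 \<longrightarrow> ord (Poly_Mapping.single i 1) (Poly_Mapping.single k 1))"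
    and G': "is_reduced_groebner_basis E (restrict_order E ord)
               (vanishing_ideal E (proj E ` P)) G'"
begin

abbreviation "VV \<equiv> {..<n}"
abbreviation "ord' \<equiv> restrict_order E ord"
abbreviation "II \<equiv> vanishing_ideal VV P"
abbreviation "II' \<equiv> vanishing_ideal E (proj E ` P)"
abbreviation "N i \<equiv> nf E ord' II' (Var i)"
abbreviation "gg k \<equiv> Var k - Const (c0 k) - (\<Sum>i\<in>E. Const (c k i) * N i)"

lemma monomsE_V: "monoms E \<subseteq> monoms VV" using E_sub by (auto simp: monoms_def)
lemma polysE_V: "f \<in> polys E \<Longrightarrow> f \<in> polys VV" using E_sub by (rule polys_mono)

sublocale O: monord VV ord by (rule monord.intro[OF ord])

lemma ord'_iff: "a \<in> monoms E \<Longrightarrow> b \<in> monoms E \<Longrightarrow> ord' a b = ord a b"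
  by (simp add: restrict_order_def)

lemma mo': "monomial_order E ord'"
proof -
  have ME: "a \<in> monoms E \<Longrightarrow> a \<in> monoms VV" for a using monomsE_V by blast
  show ?thesis unfolding monomial_order_def
  proof (intro conjI ballI impI)
    fix a assume "a \<in> monoms E" then show "\<not> ord' a a" using O.irrefl ME by (simp add: restrict_order_def)
  next
    fix a b c assume "a \<in> monoms E" "b \<in> monoms E" "c \<in> monoms E" "ord' a b" "ord' b c"
    then show "ord' a c" using O.trans ME by (simp add: restrict_order_def) blast
  next
    fix a b assume "a \<in> monoms E" "b \<in> monoms E"
    then show "a = b \<or> ord' a b \<or> ord' b a" using O.total ME by (simp add: restrict_order_def)
  next
    fix a b c assume "a \<in> monoms E" "b \<in> monoms E" "c \<in> monoms E" "ord' a b"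
    then show "ord' (a + c) (b + c)" using O.add_right ME monoms_add by (simp add: restrict_order_def)
  next
    fix a assume "a \<in> monoms E" "a \<noteq> 0"
    then show "ord' 0 a" using O.zero_less ME by (simp add: restrict_order_def)
  qed
qed

sublocale O': monord E ord' by (rule monord.intro[OF mo'])

lemma lm_E: assumes "Poly_Mapping.keys f \<subseteq> monoms E" shows "lm ord' f = lm ord f"
proof -
  have "(\<lambda>m. m \<in> Poly_Mapping.keys f \<and> (\<forall>m'\<in>Poly_Mapping.keys f. m' \<noteq> m \<longrightarrow> ord' m' m)) =
        (\<lambda>m. m \<in> Poly_Mapping.keys f \<and> (\<forall>m'\<in>Poly_Mapping.keys f. m' \<noteq> m \<longrightarrow> ord m' m))"
  proof (rule ext)
    fix m show "(m \<in> Poly_Mapping.keys f \<and> (\<forall>m'\<in>Poly_Mapping.keys f. m' \<noteq> m \<longrightarrow> ord' m' m)) =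
        (m \<in> Poly_Mapping.keys f \<and> (\<forall>m'\<in>Poly_Mapping.keys f. m' \<noteq> m \<longrightarrow> ord m' m))"
      using assms by (auto simp: restrict_order_def)
  qed
  then show ?thesis unfolding lm_def by simp
qed

lemma finE: "finite E" using E_sub finite_subset by blast
lemma finP': "finite (proj E ` P)" by (simp add: P_def)
lemma P_ne: "P \<noteq> {}" using m_pos by (auto simp: P_def)

lemma II'_iff: "f \<in> polys E \<Longrightarrow> f \<in> II' \<longleftrightarrow> f \<in> II"
  by (auto simp: vanishing_ideal_def eval_proj polysE_V)

lemma II'_II: "f \<in> II' \<Longrightarrow> f \<in> II"
  using II'_iff van_polys by blast

lemma N_props: assumes i: "i \<in> E"
  shows "Poly_Mapping.keys (N i) \<subseteq> std_monoms E ord' II'" "Var i - N i \<in> II'"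
    "\<And>v. v \<in> Poly_Mapping.keys (N i) \<Longrightarrow> v = Poly_Mapping.single i 1 \<or> ord v (Poly_Mapping.single i 1)"
    "N i \<in> polys E"
proof -
  have c: "Poly_Mapping.keys (N i) \<subseteq> std_monoms E ord' II' \<and> Var i - N i \<in> II'
     \<and> (\<forall>v\<in>Poly_Mapping.keys (N i). \<exists>u\<in>Poly_Mapping.keys (Var i :: 'a mpoly). v = u \<or> ord' v u)"
    by (rule O'.nf_char[OF finE finP' polys_Var[OF i]])
  then show "Poly_Mapping.keys (N i) \<subseteq> std_monoms E ord' II'" "Var i - N i \<in> II'" by blast+
  then show "N i \<in> polys E" by (auto simp: polys_iff std_monoms_def)
  fix v assume "v \<in> Poly_Mapping.keys (N i)"
  then have "v = Poly_Mapping.single i 1 \<or> ord' v (Poly_Mapping.single i 1)" using c by (simp add: Var_def)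
  then show "v = Poly_Mapping.single i 1 \<or> ord v (Poly_Mapping.single i 1)" by (auto simp: restrict_order_def)
qed

lemma gg_in: assumes k: "k \<in> VV - E" shows "gg k \<in> II"
proof -
  have "gg k = (Var k - Const (c0 k) - (\<Sum>i\<in>E. Const (c k i) * Var i)) +
      (\<Sum>i\<in>E. Const (c k i) * (Var i - N i))"
    by (simp add: right_diff_distrib sum_subtractf algebra_simps)
  also have "\<dots> \<in> II"
  proof (rule van_add)
    show "Var k - Const (c0 k) - (\<Sum>i\<in>E. Const (c k i) * Var i) \<in> II" using lin k by blast
    show "(\<Sum>i\<in>E. Const (c k i) * (Var i - N i)) \<in> II"
      using N_props(2) by (intro van_sum van_Const II'_II) auto
  qed
  finally show ?thesis .
qed

lemma gg_keys: assumes k: "k \<in> VV - E"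
  shows "Poly_Mapping.lookup (gg k) (Poly_Mapping.single k 1) = 1"
    "\<And>v. v \<in> Poly_Mapping.keys (gg k) \<Longrightarrow> v \<noteq> Poly_Mapping.single k 1 \<Longrightarrow> ord v (Poly_Mapping.single k 1)"
    "\<And>v. v \<in> Poly_Mapping.keys (gg k) \<Longrightarrow> v = Poly_Mapping.single k 1 \<or> v = 0 \<or> v \<in> std_monoms E ord' II'"
proof -
  define S where "S = Const (c0 k) + (\<Sum>i\<in>E. Const (c k i) * N i)"
  have gS: "gg k = Var k - S" unfolding S_def by (rule diff_diff_eq)
  have kS: "Poly_Mapping.keys S \<subseteq> {0} \<union> (\<Union>i\<in>{i\<in>E. c k i \<noteq> 0}. Poly_Mapping.keys (N i))"
  proof
    fix v assume "v \<in> Poly_Mapping.keys S"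
    then have "v \<in> Poly_Mapping.keys (Const (c0 k)) \<or> v \<in> Poly_Mapping.keys (\<Sum>i\<in>E. Const (c k i) * N i)"
      unfolding S_def using keys_add[of "Const (c0 k)" "\<Sum>i\<in>E. Const (c k i) * N i"] by blast
    then show "v \<in> {0} \<union> (\<Union>i\<in>{i\<in>E. c k i \<noteq> 0}. Poly_Mapping.keys (N i))"
    proof
      assume "v \<in> Poly_Mapping.keys (Const (c0 k))" then show ?thesis by (simp add: Const_def split: if_splits)
    next
      assume "v \<in> Poly_Mapping.keys (\<Sum>i\<in>E. Const (c k i) * N i)"
      moreover have "Poly_Mapping.keys (\<Sum>i\<in>E. Const (c k i) * N i) \<subseteq> (\<Union>i\<in>E. Poly_Mapping.keys (Const (c k i) * N i))"
        by (rule keys_sum)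
      ultimately obtain i where i: "i \<in> E" "v \<in> Poly_Mapping.keys (Const (c k i) * N i)"
        by blast
      then have "c k i \<noteq> 0" by (auto simp: in_keys_iff Const_mult_lookup)
      moreover have "v \<in> Poly_Mapping.keys (N i)" using i(2) Const_mult_keys[of "c k i" "N i"] by blast
      ultimately show ?thesis using i(1) by blast
    qed
  qed
  have k1V: "Poly_Mapping.single k 1 \<in> monoms VV" using k by (simp add: single_monoms)
  have k1E: "Poly_Mapping.single k 1 \<notin> monoms E" using k by (simp add: monoms_def)
  have Sord: "ord v (Poly_Mapping.single k 1)" if v: "v \<in> Poly_Mapping.keys S" for v
  proof -
    from kS v have "v = 0 \<or> (\<exists>i\<in>E. c k i \<noteq> 0 \<and> v \<in> Poly_Mapping.keys (N i))" by blast
    then show ?thesis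
    proof
      assume "v = 0" then show ?thesis using O.zero_less[OF k1V single_nz] by simp
    next
      assume "\<exists>i\<in>E. c k i \<noteq> 0 \<and> v \<in> Poly_Mapping.keys (N i)"
      then obtain i where i: "i \<in> E" "c k i \<noteq> 0" "v \<in> Poly_Mapping.keys (N i)" by blast
      have oik: "ord (Poly_Mapping.single i 1) (Poly_Mapping.single k 1)"
        using conjunct2[OF bspec[OF lin k]] i(1,2) by blast
      have vE: "v \<in> monoms E" using N_props(1)[OF i(1)] i(3) by (auto simp: std_monoms_def)
      have iV: "Poly_Mapping.single i 1 \<in> monoms VV" using i E_sub by (auto simp: single_monoms)
      have vV: "v \<in> monoms VV" using vE monomsE_V by blast
      from N_props(3)[OF i(1) i(3)] show ?thesis
      proof
        assume "v = Poly_Mapping.single i 1" then show ?thesis using oik by simp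
      next
        assume "ord v (Poly_Mapping.single i 1)"
        then show ?thesis using O.trans[OF vV iV k1V] oik by blast
      qed
    qed
  qed
  have notS: "Poly_Mapping.single k 1 \<notin> Poly_Mapping.keys S"
  proof
    assume "Poly_Mapping.single k 1 \<in> Poly_Mapping.keys S"
    then show False using Sord O.irrefl[OF k1V] by blast
  qed
  show "Poly_Mapping.lookup (gg k) (Poly_Mapping.single k 1) = 1"
    using notS unfolding gS by (simp add: lookup_minus Var_def in_keys_iff)
  fix v assume v: "v \<in> Poly_Mapping.keys (gg k)"
  then have v': "v = Poly_Mapping.single k 1 \<or> v \<in> Poly_Mapping.keys S"
    unfolding gS using keys_diff_sub[of "Var k" S] by (auto simp: Var_def split: if_splits)
  then show "v \<noteq> Poly_Mapping.single k 1 \<Longrightarrow> ord v (Poly_Mapping.single k 1)" using Sord by blast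
  show "v = Poly_Mapping.single k 1 \<or> v = 0 \<or> v \<in> std_monoms E ord' II'"
  proof (cases "v = Poly_Mapping.single k 1")
    case False
    then have "v \<in> Poly_Mapping.keys S" using v' by blast
    then have "v = 0 \<or> (\<exists>i\<in>E. v \<in> Poly_Mapping.keys (N i))" using kS by blast
    then show ?thesis
    proof
      assume "\<exists>i\<in>E. v \<in> Poly_Mapping.keys (N i)"
      then obtain i where "i \<in> E" "v \<in> Poly_Mapping.keys (N i)" by blast
      then show ?thesis using N_props(1)[of i] by blast
    qed simp
  qed simp
qed

lemma gg_lm: assumes k: "k \<in> VV - E"
  shows "lm ord (gg k) = Poly_Mapping.single k 1" "gg k \<noteq> 0" "lc ord (gg k) = 1"
    "gg k \<notin> polys E" "gg k \<in> polys VV"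
proof -
  have mem: "Poly_Mapping.single k 1 \<in> Poly_Mapping.keys (gg k)" using gg_keys(1)[OF k] by (simp add: in_keys_iff)
  show "gg k \<in> polys VV" using gg_in[OF k] van_polys by blast
  then have kV: "Poly_Mapping.keys (gg k) \<subseteq> monoms VV" by (simp add: polys_iff)
  show lm: "lm ord (gg k) = Poly_Mapping.single k 1"
    by (rule O.lm_eq[OF mem kV]) (use gg_keys(2)[OF k] in blast)
  show "gg k \<noteq> 0" using mem by auto
  show "lc ord (gg k) = 1" using gg_keys(1)[OF k] by (simp add: lc_def lm)
  show "gg k \<notin> polys E" using mem k by (auto simp: polys_iff monoms_def)
qed

lemma G'_props: "finite G'" "G' \<subseteq> II'" "0 \<notin> G'"
   "ideal_gen E {monom_poly (lm ord' g) | g. g \<in> G'} = initial_ideal E ord' II'"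
   "\<And>g. g \<in> G' \<Longrightarrow> lc ord' g = 1"
   "\<And>g m. g \<in> G' \<Longrightarrow> m \<in> Poly_Mapping.keys g \<Longrightarrow> (monom_poly m :: 'a mpoly) \<notin> ideal_gen E {monom_poly (lm ord' h) | h. h \<in> G' - {g}}"
proof -
  have ABC: "is_groebner_basis E ord' II' G' \<and> (\<forall>g\<in>G'. lc ord' g = 1)
    \<and> (\<forall>g\<in>G'. \<forall>m\<in>Poly_Mapping.keys g. (monom_poly m :: 'a mpoly) \<notin> ideal_gen E {monom_poly (lm ord' h) | h. h \<in> G' - {g}})"
    using G' unfolding is_reduced_groebner_basis_def .
  note A = conjunct1[OF ABC] and B = conjunct1[OF conjunct2[OF ABC]] and C = conjunct2[OF conjunct2[OF ABC]]
  show "finite G'" "G' \<subseteq> II'" "0 \<notin> G'"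
   "ideal_gen E {monom_poly (lm ord' g) | g. g \<in> G'} = initial_ideal E ord' II'"
    using A unfolding is_groebner_basis_def by simp_all
  show "\<And>g. g \<in> G' \<Longrightarrow> lc ord' g = 1" using B by simp
  show "\<And>g m. g \<in> G' \<Longrightarrow> m \<in> Poly_Mapping.keys g \<Longrightarrow> (monom_poly m :: 'a mpoly) \<notin> ideal_gen E {monom_poly (lm ord' h) | h. h \<in> G' - {g}}"
    using C by simp
qed

lemma G'_elem: assumes g: "g \<in> G'"
  shows "g \<in> polys E" "g \<in> II" "g \<noteq> 0" "lm ord g = lm ord' g" "lm ord g \<in> Poly_Mapping.keys g"
    "lm ord g \<in> monoms E" "lm ord g \<noteq> 0" "lc ord g = 1"
proof -
  show gE: "g \<in> polys E" using G'_props(2) g van_polys by blast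
  show "g \<in> II" using G'_props(2) g II'_II by blast
  show g0: "g \<noteq> 0" using G'_props(3) g by blast
  have kE: "Poly_Mapping.keys g \<subseteq> monoms E" using gE by (simp add: polys_iff)
  show lmeq: "lm ord g = lm ord' g" using lm_E[OF kE] by simp
  have lp: "lm ord' g \<in> Poly_Mapping.keys g" "\<forall>m'\<in>Poly_Mapping.keys g. m' \<noteq> lm ord' g \<longrightarrow> ord' m' (lm ord' g)"
    using O'.lm_prop[OF g0 kE] by blast+
  show "lm ord g \<in> Poly_Mapping.keys g" using lp lmeq by simp
  show "lm ord g \<in> monoms E" using lp lmeq kE by auto
  show "lc ord g = 1" using G'_props(5)[OF g] lmeq by (simp add: lc_def)
  show "lm ord g \<noteq> 0"
  proof
    assume l0: "lm ord g = 0"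
    have "Poly_Mapping.keys g \<subseteq> {0}"
    proof
      fix v assume v: "v \<in> Poly_Mapping.keys g"
      show "v \<in> {0}"
      proof (rule ccontr)
        assume "v \<notin> {0}"
        then have "ord' v 0" using lp(2) v l0 lmeq by auto
        moreover have "ord' 0 v" using O'.zero_less[of v] kE v \<open>v \<notin> {0}\<close> by blast
        ultimately show False using O'.asym[of v 0] kE v by auto
      qed
    qed
    have geq: "g = Poly_Mapping.single 0 (Poly_Mapping.lookup g 0)"
    proof (rule poly_mapping_eqI)
      fix v show "Poly_Mapping.lookup g v = Poly_Mapping.lookup (Poly_Mapping.single 0 (Poly_Mapping.lookup g 0)) v"
      proof (cases "v = 0")
        case True then show ?thesis by simp
      next
        case False
        then have "v \<notin> Poly_Mapping.keys g" using \<open>Poly_Mapping.keys g \<subseteq> {0}\<close> by blast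
        then show ?thesis using False by (simp add: in_keys_iff lookup_single)
      qed
    qed
    have "Poly_Mapping.lookup g 0 \<noteq> 0" using lp l0 lmeq by (simp add: in_keys_iff)
    moreover obtain q where q: "q \<in> proj E ` P" using P_ne by blast
    moreover have "eval g q = 0" using G'_props(2) g q by (auto simp: vanishing_ideal_def)
    ultimately show False by (subst (asm) geq) (simp add: eval_single)
  qed
qed

end




lemma keys_sub_add: "Poly_Mapping.keys a \<subseteq> Poly_Mapping.keys ((a::monom) + w)"
  by (simp add: keys_add_nat)

context main_setting begin

lemma elim: assumes f: "f \<in> II" "f \<noteq> 0" "lm ord f \<in> monoms E"
  shows "\<exists>g\<in>G'. \<exists>w. lm ord f = lm ord g + w"
proof -
  define \<mu> where "\<mu> u = (\<Sum>l\<in>VV - E. Poly_Mapping.lookup u l)" for u :: monom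
  define R where "R = measure \<mu>"
  have step: "\<exists>r. Poly_Mapping.keys r \<subseteq> monoms VV \<and> monom_poly u - r \<in> II
      \<and> (\<forall>v\<in>Poly_Mapping.keys r. ord v u \<and> (v, u) \<in> R)"
    if uV: "u \<in> monoms VV" and uE: "u \<notin> monoms E" for u
  proof -
    obtain k where k: "k \<in> Poly_Mapping.keys u" "k \<notin> E" using uE by (auto simp: monoms_def)
    have kV: "k \<in> VV" using uV k by (auto simp: monoms_def)
    have kVE: "k \<in> VV - E" using kV k by blast
    have "1 \<le> Poly_Mapping.lookup u k" using k by (simp add: in_keys_iff)
    define w where "w = u - Poly_Mapping.single k 1"
    have u_eq: "u = w + Poly_Mapping.single k 1" unfolding w_def by (rule split_single) fact
    have wV: "w \<in> monoms VV" using monoms_addD[of w "Poly_Mapping.single k 1" VV] u_eq uV by simp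
    define r where "r = Poly_Mapping.single w (c0 k) + (\<Sum>i\<in>E. Poly_Mapping.single (w + Poly_Mapping.single i 1) (c k i))"
    have eq: "monom_poly u - r = monom_poly w * (Var k - Const (c0 k) - (\<Sum>i\<in>E. Const (c k i) * Var i))"
      unfolding r_def u_eq Var_def Const_def monom_poly_def
      by (simp add: right_diff_distrib distrib_left sum_distrib_left mult_single diff_diff_eq mult.left_commute)
    have LI: "Var k - Const (c0 k) - (\<Sum>i\<in>E. Const (c k i) * Var i) \<in> II"
      using conjunct1[OF bspec[OF lin kVE]] .
    have lin2: "\<forall>i\<in>E. c k i \<noteq> 0 \<longrightarrow> ord (Poly_Mapping.single i 1) (Poly_Mapping.single k 1)"
      using conjunct2[OF bspec[OF lin kVE]] .
    have kr: "Poly_Mapping.keys r \<subseteq> {w} \<union> {w + Poly_Mapping.single i 1 | i. i \<in> E \<and> c k i \<noteq> 0}"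
    proof
      fix v assume "v \<in> Poly_Mapping.keys r"
      then have "v \<in> Poly_Mapping.keys (Poly_Mapping.single w (c0 k)) \<or>
         v \<in> Poly_Mapping.keys (\<Sum>i\<in>E. Poly_Mapping.single (w + Poly_Mapping.single i 1) (c k i))"
        unfolding r_def using keys_add[of "Poly_Mapping.single w (c0 k)" "\<Sum>i\<in>E. Poly_Mapping.single (w + Poly_Mapping.single i 1) (c k i)"]
        by blast
      moreover have "Poly_Mapping.keys (\<Sum>i\<in>E. Poly_Mapping.single (w + Poly_Mapping.single i 1) (c k i))
         \<subseteq> (\<Union>i\<in>E. Poly_Mapping.keys (Poly_Mapping.single (w + Poly_Mapping.single i 1) (c k i)))"
        by (rule keys_sum)
      ultimately show "v \<in> {w} \<union> {w + Poly_Mapping.single i 1 | i. i \<in> E \<and> c k i \<noteq> 0}"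
        by (auto split: if_splits)
    qed
    have muw: "\<mu> u = \<mu> w + 1" unfolding \<mu>_def u_eq using kVE
      by (simp add: lookup_add sum.distrib lookup_single when_def)
    have k1V: "Poly_Mapping.single k 1 \<in> monoms VV" using kV by (simp add: single_monoms)
    have "\<forall>v\<in>Poly_Mapping.keys r. ord v u \<and> (v, u) \<in> R"
    proof
      fix v assume "v \<in> Poly_Mapping.keys r"
      then have "v = w \<or> (\<exists>i. i \<in> E \<and> c k i \<noteq> 0 \<and> v = w + Poly_Mapping.single i 1)" using kr by blast
      then show "ord v u \<and> (v, u) \<in> R"
      proof
        assume v: "v = w"
        have "ord v u" unfolding v u_eq by (rule O.le_add[OF wV k1V single_nz])
        moreover have "\<mu> v < \<mu> u" using muw v by simp
        ultimately show ?thesis by (simp add: R_def)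
      next
        assume "\<exists>i. i \<in> E \<and> c k i \<noteq> 0 \<and> v = w + Poly_Mapping.single i 1"
        then obtain i where i: "i \<in> E" "c k i \<noteq> 0" "v = w + Poly_Mapping.single i 1" by blast
        have iV: "Poly_Mapping.single i 1 \<in> monoms VV" using i E_sub by (auto simp: single_monoms)
        have "ord (Poly_Mapping.single i 1) (Poly_Mapping.single k 1)" using lin2 i by blast
        then have "ord v u" unfolding i(3) u_eq by (rule O.add_left[OF iV k1V wV])
        moreover have "\<mu> v = \<mu> w" unfolding \<mu>_def i(3) using i(1)
          by (simp add: lookup_add sum.distrib lookup_single when_def)
        ultimately show ?thesis using muw by (simp add: R_def)
      qed
    qed
    moreover have "Poly_Mapping.keys r \<subseteq> monoms VV"
      using kr wV E_sub by (auto intro!: monoms_add single_monoms)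
    moreover have "monom_poly u - r \<in> II" unfolding eq by (rule van_mult[OF polys_monom[OF wV] LI])
    ultimately show ?thesis by blast
  qed
  have fV: "Poly_Mapping.keys f \<subseteq> monoms VV" using van_polys[OF f(1)] by (simp add: polys_iff)
  have wfR: "wf R" by (simp add: R_def)
  obtain h where h: "Poly_Mapping.keys h \<subseteq> monoms E" "f - h \<in> II"
     "\<forall>v\<in>Poly_Mapping.keys h. \<exists>u\<in>Poly_Mapping.keys f. v = u \<or> ord v u"
     "\<forall>m. m \<in> monoms E \<longrightarrow> m \<in> Poly_Mapping.keys f \<longrightarrow> (\<forall>u\<in>Poly_Mapping.keys f. u \<noteq> m \<longrightarrow> ord u m)
           \<longrightarrow> Poly_Mapping.lookup h m = Poly_Mapping.lookup f m"
    using O.reduce_poly[OF van_zero van_add van_Const wfR monomsE_V step fV] by blast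
  have lmf: "lm ord f \<in> Poly_Mapping.keys f" "\<forall>m'\<in>Poly_Mapping.keys f. m' \<noteq> lm ord f \<longrightarrow> ord m' (lm ord f)"
    using O.lm_prop[OF f(2) fV] by blast+
  have lk: "Poly_Mapping.lookup h (lm ord f) = Poly_Mapping.lookup f (lm ord f)"
    using h(4) f(3) lmf by blast
  then have lmh: "lm ord f \<in> Poly_Mapping.keys h" using lmf(1) by (simp add: in_keys_iff)
  have hE: "h \<in> polys E" using h(1) by (simp add: polys_iff)
  have "h = f - (f - h)" by simp
  then have "h \<in> II" using van_diff[OF f(1) h(2)] by simp
  then have hI': "h \<in> II'" using II'_iff[OF hE] by simp
  have h0: "h \<noteq> 0" using lmh by auto
  have lmf_V: "lm ord f \<in> monoms VV" using lmf fV by blast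
  have "lm ord' h = lm ord f"
  proof (rule O'.lm_eq[OF lmh h(1)], intro ballI impI)
    fix v assume v: "v \<in> Poly_Mapping.keys h" "v \<noteq> lm ord f"
    obtain u where u: "u \<in> Poly_Mapping.keys f" "v = u \<or> ord v u" using h(3) v(1) by blast
    have vE: "v \<in> monoms E" using v h(1) by blast
    then have vV: "v \<in> monoms VV" using monomsE_V by blast
    have uV: "u \<in> monoms VV" using u fV by blast
    have "ord v (lm ord f)"
    proof (cases "v = u")
      case True then show ?thesis using lmf(2) u(1) v(2) by blast
    next
      case False
      then have ovu: "ord v u" using u by blast
      show ?thesis
      proof (cases "u = lm ord f")
        case True then show ?thesis using ovu by simp
      next
        case False
        then have "ord u (lm ord f)" using lmf(2) u(1) by blast
        then show ?thesis using O.trans[OF vV uV lmf_V] ovu by blast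
      qed
    qed
    then show "ord' v (lm ord f)" using vE f(3) by (simp add: restrict_order_def)
  qed
  then have "monom_poly (lm ord f) \<in> initial_ideal E ord' II'"
    unfolding initial_ideal_def using hI' h0 by (intro ideal_gen_base) (metis (mono_tags, lifting) mem_Collect_eq)
  moreover have "ideal_gen E (monom_poly ` (lm ord' ` G') :: 'a mpoly set) = initial_ideal E ord' II'"
    using G'_props(4) unfolding lm_image_set .
  ultimately have "monom_poly (lm ord f) \<in> ideal_gen E (monom_poly ` (lm ord' ` G') :: 'a mpoly set)" by simp
  then obtain a w where a: "a \<in> lm ord' ` G'" "lm ord f = a + w" using monom_ideal_mem by blast
  then obtain g where "g \<in> G'" "a = lm ord g" using G'_elem(4) by auto
  then show ?thesis using a by blast
qed

end




context main_setting begin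

abbreviation "Gall \<equiv> G' \<union> gg ` (VV - E)"

lemma Gall_I: assumes g: "g \<in> Gall" shows "g \<in> II \<and> g \<noteq> 0"
proof (cases "g \<in> G'")
  case True then show ?thesis using G'_elem(2,3) by blast
next
  case False
  then obtain k where k: "k \<in> VV - E" "g = gg k" using g by blast
  then show ?thesis using gg_in[OF k(1)] gg_lm(2)[OF k(1)] by simp
qed

lemma GB_eq: "ideal_gen VV {monom_poly (lm ord g) | g. g \<in> Gall} = initial_ideal VV ord II"
proof
  show "ideal_gen VV {monom_poly (lm ord g) | g. g \<in> Gall} \<subseteq> initial_ideal VV ord II"
    unfolding initial_ideal_def
  proof (rule ideal_gen_closure, rule subsetI)
    fix x :: "'a mpoly" assume "x \<in> {monom_poly (lm ord g) | g. g \<in> Gall}"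
    then obtain g where g: "g \<in> Gall" "x = monom_poly (lm ord g)" by blast
    then have "x \<in> {monom_poly (lm ord f) | f. f \<in> II \<and> f \<noteq> 0}" using Gall_I by blast
    then show "x \<in> ideal_gen VV {monom_poly (lm ord f) | f. f \<in> II \<and> f \<noteq> 0}" by (rule ideal_gen_base)
  qed
next
  show "initial_ideal VV ord II \<subseteq> ideal_gen VV {monom_poly (lm ord g) | g. g \<in> Gall}"
    unfolding initial_ideal_def
  proof (rule ideal_gen_closure, rule subsetI)
    fix x :: "'a mpoly" assume "x \<in> {monom_poly (lm ord f) | f. f \<in> II \<and> f \<noteq> 0}"
    then obtain f where f: "f \<in> II" "f \<noteq> 0" "x = monom_poly (lm ord f)" by blast
    have fV: "Poly_Mapping.keys f \<subseteq> monoms VV" using van_polys[OF f(1)] by (simp add: polys_iff)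
    have lmV: "lm ord f \<in> monoms VV" using O.lm_prop[OF f(2) fV] fV by blast
    have "\<exists>g\<in>Gall. \<exists>w. lm ord f = lm ord g + w"
    proof (cases "lm ord f \<in> monoms E")
      case True
      then show ?thesis using elim[OF f(1,2)] by blast
    next
      case False
      then obtain k where k: "k \<in> Poly_Mapping.keys (lm ord f)" "k \<notin> E" by (auto simp: monoms_def)
      have kVE: "k \<in> VV - E" using k lmV by (auto simp: monoms_def)
      have "1 \<le> Poly_Mapping.lookup (lm ord f) k" using k by (simp add: in_keys_iff)
      then have "lm ord f = (lm ord f - Poly_Mapping.single k 1) + Poly_Mapping.single k 1" by (rule split_single)
      then have "lm ord f = lm ord (gg k) + (lm ord f - Poly_Mapping.single k 1)"
        using gg_lm(1)[OF kVE] by (simp add: add.commute)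
      then show ?thesis using kVE by blast
    qed
    then obtain g w where g: "g \<in> Gall" "lm ord f = lm ord g + w" by blast
    have wV: "w \<in> monoms VV" using monoms_addD[of "lm ord g" w VV] g(2) lmV by simp
    have "monom_poly (lm ord f) \<in> ideal_gen VV (monom_poly ` (lm ord ` Gall) :: 'a mpoly set)"
      by (rule monom_ideal_mem'[OF _ wV g(2)]) (use g(1) in blast)
    moreover have "{monom_poly (lm ord g) | g. g \<in> Gall} = (monom_poly ` (lm ord ` Gall) :: 'a mpoly set)"
      by (rule lm_image_set)
    ultimately show "x \<in> ideal_gen VV {monom_poly (lm ord g) | g. g \<in> Gall}"
      using f(3) by simp
  qed
qed

lemma keys_of_add: "t = a + w \<Longrightarrow> Poly_Mapping.keys a \<subseteq> Poly_Mapping.keys (t::monom)"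
  by (simp add: keys_add_nat)

lemma reduced: assumes g: "g \<in> Gall" and mg: "t \<in> Poly_Mapping.keys g"
  shows "(monom_poly t :: 'a mpoly) \<notin> ideal_gen VV {monom_poly (lm ord h) | h. h \<in> Gall - {g}}"
proof
  assume "(monom_poly t :: 'a mpoly) \<in> ideal_gen VV {monom_poly (lm ord h) | h. h \<in> Gall - {g}}"
  then have "(monom_poly t :: 'a mpoly) \<in> ideal_gen VV (monom_poly ` (lm ord ` (Gall - {g})))"
    unfolding lm_image_set .
  from monom_ideal_mem[OF this] obtain a w where aw: "a \<in> lm ord ` (Gall - {g})" "t = a + w" by blast
  from aw(1) obtain h where h0: "h \<in> Gall - {g}" "a = lm ord h" by (rule imageE)
  have h: "h \<in> Gall" "h \<noteq> g" "t = lm ord h + w" using h0 aw(2) by auto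
  show False
  proof (cases "g \<in> G'")
    case True
    have mE: "t \<in> monoms E" using G'_elem(1)[OF True] mg by (auto simp: polys_iff)
    show False
    proof (cases "h \<in> G'")
      case hG: True
      have wE: "w \<in> monoms E" using monoms_addD[of "lm ord h" w E] h(3) mE by simp
      have aA: "lm ord' h \<in> lm ord' ` (G' - {g})" using hG h(2) by blast
      have t': "t = lm ord' h + w" using h(3) G'_elem(4)[OF hG] by simp
      have "(monom_poly t :: 'a mpoly) \<in> ideal_gen E (monom_poly ` (lm ord' ` (G' - {g})))"
        by (rule monom_ideal_mem'[OF aA wE t'])
      then have "(monom_poly t :: 'a mpoly) \<in> ideal_gen E {monom_poly (lm ord' h) | h. h \<in> G' - {g}}"
        unfolding lm_image_set .
      then show False using G'_props(6)[OF True mg] by blast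
    next
      case False
      then obtain k where k: "k \<in> VV - E" "h = gg k" using h(1) by blast
      have "k \<in> Poly_Mapping.keys t" using keys_of_add[OF h(3)] gg_lm(1)[OF k(1)] k(2) by auto
      then show False using mE k(1) by (auto simp: monoms_def)
    qed
  next
    case False
    then obtain k where k: "k \<in> VV - E" "g = gg k" using g by blast
    have mcases: "t = Poly_Mapping.single k 1 \<or> t = 0 \<or> t \<in> std_monoms E ord' II'"
      using gg_keys(3)[OF k(1), of t] mg k(2) by simp
    show False
    proof (cases "h \<in> G'")
      case hG: True
      have lE: "lm ord h \<in> monoms E" "lm ord h \<noteq> 0" using G'_elem(6,7)[OF hG] by blast+
      have "Poly_Mapping.keys (lm ord h) \<noteq> {}" using lE(2) by simp
      then obtain j where j: "j \<in> Poly_Mapping.keys (lm ord h)" by blast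
      have jE: "j \<in> E" using j lE(1) by (auto simp: monoms_def)
      have jm: "j \<in> Poly_Mapping.keys t" using keys_of_add[OF h(3)] j by blast
      from mcases show False
      proof (elim disjE)
        assume "t = Poly_Mapping.single k 1"
        then show False using jm jE k(1) by (auto split: if_splits)
      next
        assume "t = 0" then show False using jm by simp
      next
        assume ms: "t \<in> std_monoms E ord' II'"
        then have mE: "t \<in> monoms E" by (simp add: std_monoms_def)
        have wE: "w \<in> monoms E" using monoms_addD[of "lm ord h" w E] h(3) mE by simp
        have aA: "lm ord' h \<in> lm ord' ` G'" using hG by blast
        have t': "t = lm ord' h + w" using h(3) G'_elem(4)[OF hG] by simp
        have "(monom_poly t :: 'a mpoly) \<in> ideal_gen E (monom_poly ` (lm ord' ` G'))"
          by (rule monom_ideal_mem'[OF aA wE t'])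
        then have "(monom_poly t :: 'a mpoly) \<in> initial_ideal E ord' II'"
          using G'_props(4) unfolding lm_image_set by simp
        then show False using ms by (simp add: std_monoms_def)
      qed
    next
      case False
      then obtain k' where k': "k' \<in> VV - E" "h = gg k'" using h(1) by blast
      have kk: "k' \<noteq> k" using k k' h(2) by blast
      have k't: "k' \<in> Poly_Mapping.keys t" using keys_of_add[OF h(3)] gg_lm(1)[OF k'(1)] k'(2) by auto
      from mcases show False
      proof (elim disjE)
        assume "t = Poly_Mapping.single k 1"
        then show False using k't kk by (auto split: if_splits)
      next
        assume "t = 0" then show False using k't by simp
      next
        assume "t \<in> std_monoms E ord' II'"
        then show False using k't k'(1) by (auto simp: std_monoms_def monoms_def)
      qed
    qed
  qed
qed

lemma main_result:
  "G' \<inter> gg ` (VV - E) = {} \<and> is_reduced_groebner_basis VV ord II Gall"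
proof -
  have disj: "G' \<inter> gg ` (VV - E) = {}" using G'_elem(1) gg_lm(4) by blast
  have fin: "finite Gall" using G'_props(1) by simp
  have sub: "Gall \<subseteq> II" using Gall_I by blast
  have nz: "0 \<notin> Gall" using Gall_I by blast
  have lc: "\<forall>g\<in>Gall. lc ord g = 1" using G'_elem(8) gg_lm(3) by blast
  have red: "\<forall>g\<in>Gall. \<forall>m\<in>Poly_Mapping.keys g. (monom_poly m :: 'a mpoly) \<notin> ideal_gen VV {monom_poly (lm ord h) | h. h \<in> Gall - {g}}"
    using reduced by blast
  show ?thesis unfolding is_reduced_groebner_basis_def is_groebner_basis_def
    using disj fin sub nz GB_eq lc red by blast
qed

end

theorem mainTheorem15:
  fixes n m :: nat
    and ps :: "nat \<Rightarrow> nat \<Rightarrow> 'a::field"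
    and ord :: "monom \<Rightarrow> monom \<Rightarrow> bool"
    and E :: "nat set"
    and c0 :: "nat \<Rightarrow> 'a" and c :: "nat \<Rightarrow> nat \<Rightarrow> 'a"
    and G' :: "'a mpoly set"
  defines "P \<equiv> ps ` {..<m}"
  assumes ord: "monomial_order {..<n} ord"
    and pts_in: "\<forall>l<m. \<forall>i\<ge>n. ps l i = 0"
    and distinct: "inj_on ps {..<m}"
    and E_sub: "E \<subseteq> {..<n}"
    and supp_B: "supp (std_monoms {..<n} ord (vanishing_ideal {..<n} P :: 'a mpoly set)) \<subseteq> E"
    and card_E: "int (card E) \<le> min (int m - 1) (int n)"
    and rank_E: "vec_space.rank (card E) (eval_matrix E m ps) = card E"
    and lin: "\<forall>k\<in>{..<n} - E.
          Var k - Const (c0 k) - (\<Sum>i\<in>E. Const (c k i) * Var i) \<in> vanishing_ideal {..<n} P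
        \<and> (\<forall>i\<in>E. c k i \<noteq> 0 \<longrightarrow> ord (Poly_Mapping.single i 1) (Poly_Mapping.single k 1))"
    and G': "is_reduced_groebner_basis E (restrict_order E ord)
               (vanishing_ideal E (proj E ` P)) G'"
  shows "G' \<inter> (\<lambda>k. Var k - Const (c0 k) - (\<Sum>i\<in>E. Const (c k i) *
                   nf E (restrict_order E ord) (vanishing_ideal E (proj E ` P)) (Var i)))
              ` ({..<n} - E) = {}
    \<and> is_reduced_groebner_basis {..<n} ord (vanishing_ideal {..<n} P)
       (G' \<union> (\<lambda>k. Var k - Const (c0 k) - (\<Sum>i\<in>E. Const (c k i) *
                   nf E (restrict_order E ord) (vanishing_ideal E (proj E ` P)) (Var i)))
              ` ({..<n} - E))"
proof -
  have m_pos: "0 < m" using card_E by simp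
  interpret main_setting n m ps ord E c0 c G' P
    by (rule main_setting.intro) (use P_def ord E_sub m_pos lin G' in auto)
  show ?thesis using main_result .
qed


end
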